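(* Let $k\ge 1$ be an integer and let $\bm\delta=(\delta_1,\dots,\delta_k)$ be any fixed sequence of positive reals. Then \[C_k(n,\dots,n)=\begin{cases}\Omega\left(n^{\lfloor (k+1)/3\rfloor+1}\right), & \text{if } k\equiv 0,2 \pmod 3,\\ \Omega\left(n^{(k-1)/3}\,u_2(n)\right), & \text{if } k\equiv 1\pmod 3.\end{cases}\]
   Context: For a fixed $\bm\delta=(\delta_1,\dots,\delta_k)$ and sets $P_1,\dots,P_{k+1}\subseteq\mathbb{R}^2$, let $C_k(P_1,\dots,P_{k+1})$ be the number of $(k+1)$-tuples $(p_1,\dots,p_{k+1})$ with $p_i\in P_i$ for all $i$, $\|p_i-p_{i+1}\|=\delta_i$ for all $i\in[k]$, and $p_i\ne p_j$ for $i\ne j$. Let $C_k(n_1,\dots,n_{k+1})$ be the maximum of $C_k(P_1,\dots,P_{k+1})$ over all $P_1,\dots,P_{k+1}\subseteq\mathbb{R}^2$ with $|P_i|\le n_i$. $u_2(n)$ denotes the maximum number of pairs of points at distance exactly $1$ in a set of $n$ points in $\mathbb{R}^2$. Implicit constants may depend on $k$ and $\bm\delta$. *)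

theory Defs
  imports "HOL-Analysis.Analysis" "HOL-Library.Landau_Symbols"
begin

text \<open>A (k+1)-tuple of points is a function p indexed by {1..k+1}; the distances
  delta are indexed by {1..k}; the sets P are indexed by {1..k+1}.\<close>

definition path_tuples ::
  "nat \<Rightarrow> (nat \<Rightarrow> real) \<Rightarrow> (nat \<Rightarrow> (real^2) set) \<Rightarrow> (nat \<Rightarrow> real^2) set" where
  "path_tuples k \<delta> P =
     {p \<in> {1..k+1} \<rightarrow>\<^sub>E UNIV.
        (\<forall>i\<in>{1..k+1}. p i \<in> P i) \<and>
        (\<forall>i\<in>{1..k}. dist (p i) (p (i+1)) = \<delta> i) \<and>
        inj_on p {1..k+1}}"

definition Ck_sets :: "nat \<Rightarrow> (nat \<Rightarrow> real) \<Rightarrow> (nat \<Rightarrow> (real^2) set) \<Rightarrow> nat" where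
  "Ck_sets k \<delta> P = card (path_tuples k \<delta> P)"

definition Ck :: "nat \<Rightarrow> (nat \<Rightarrow> real) \<Rightarrow> nat \<Rightarrow> nat" where
  "Ck k \<delta> n = Max {Ck_sets k \<delta> P | P.
      \<forall>i\<in>{1..k+1}. finite (P i) \<and> card (P i) \<le> n}"

definition unit_pairs :: "(real^2) set \<Rightarrow> nat" where
  "unit_pairs S = card {{p, q} | p q. p \<in> S \<and> q \<in> S \<and> dist p q = 1}"

definition u2 :: "nat \<Rightarrow> nat" where
  "u2 n = Max {unit_pairs S | S. finite S \<and> card S = n}"

end

theory Submission
  imports Defs "HOL-Library.Countable"
begin


lemma dist2: "dist (x::real^2) y = sqrt ((x$1 - y$1)^2 + (x$2 - y$2)^2)"
  by (simp add: dist_vec_def L2_set_def sum_2 dist_real_def)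

definition lexl :: "real^2 \<Rightarrow> real^2 \<Rightarrow> bool" where
  "lexl a b \<longleftrightarrow> a$1 < b$1 \<or> (a$1 = b$1 \<and> a$2 < b$2)"

lemma lexl_trans: "lexl a b \<Longrightarrow> lexl b c \<Longrightarrow> lexl a c"
  unfolding lexl_def by auto

lemma lexl_irrefl: "\<not> lexl a a" unfolding lexl_def by auto

lemma lexl_total: "a \<noteq> b \<Longrightarrow> lexl a b \<or> lexl b a"
  unfolding lexl_def vec_eq_iff forall_2 by auto

lemma lexl_transl: "lexl (a + v) (b + v) = lexl a b"
  unfolding lexl_def by auto

lemma lexl_scale: "r > 0 \<Longrightarrow> lexl (v + r *\<^sub>R a) (v + r *\<^sub>R b) = lexl a b"
  unfolding lexl_def by auto

definition incr_tuples ::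
  "nat \<Rightarrow> (nat \<Rightarrow> real) \<Rightarrow> (nat \<Rightarrow> (real^2) set) \<Rightarrow> (nat \<Rightarrow> real^2) set" where
  "incr_tuples k \<delta> P =
     {p \<in> {1..k+1} \<rightarrow>\<^sub>E UNIV.
        (\<forall>i\<in>{1..k+1}. p i \<in> P i) \<and>
        (\<forall>i\<in>{1..k}. dist (p i) (p (i+1)) = \<delta> i \<and> lexl (p i) (p (i+1)))}"

lemma chain_lexl:
  fixes p :: "nat \<Rightarrow> real^2" and k i j :: nat
  assumes "\<forall>i\<in>{1..k}. lexl (p i) (p (i+1))" "1 \<le> i"
  shows "i < j \<Longrightarrow> j \<le> k+1 \<Longrightarrow> lexl (p i) (p j)"
proof (induction j)
  case 0 then show ?case by simp
next
  case (Suc j)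
  show ?case
  proof (cases "i = j")
    case True then show ?thesis using assms(1,2) Suc.prems by auto
  next
    case False
    then have "lexl (p i) (p j)" using Suc by auto
    moreover have "lexl (p j) (p (j+1))" using assms(1,2) Suc.prems False by auto
    ultimately show ?thesis using lexl_trans by auto
  qed
qed

lemma incr_sub_path: "incr_tuples k \<delta> P \<subseteq> path_tuples k \<delta> P"
proof
  fix p assume p: "p \<in> incr_tuples k \<delta> P"
  have ch: "\<forall>i\<in>{1..k}. lexl (p i) (p (i+1))" using p unfolding incr_tuples_def by auto
  have "inj_on p {1..k+1}"
  proof (rule inj_onI)
    fix i j assume ij: "i \<in> {1..k+1}" "j \<in> {1..k+1}" "p i = p j"
    show "i = j"
    proof (rule ccontr)
      assume "i \<noteq> j"
      then consider "i < j" | "j < i" by linarith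
      then show False
        using chain_lexl[OF ch, of i j] chain_lexl[OF ch, of j i] ij lexl_irrefl by (cases; auto)
    qed
  qed
  then show "p \<in> path_tuples k \<delta> P" using p unfolding incr_tuples_def path_tuples_def by auto
qed

lemma path_sub_PiE: "path_tuples k \<delta> P \<subseteq> Pi\<^sub>E {1..k+1} P"
  unfolding path_tuples_def by (auto simp: PiE_def Pi_def)

lemma Ck_sets_le:
  assumes "\<forall>i\<in>{1..k+1}. finite (P i) \<and> card (P i) \<le> n"
  shows "Ck_sets k \<delta> P \<le> n ^ (k+1)"
proof -
  have "Ck_sets k \<delta> P \<le> card (Pi\<^sub>E {1..k+1} P)"
    unfolding Ck_sets_def using path_sub_PiE assms by (intro card_mono) (auto intro: finite_PiE)
  also have "\<dots> = (\<Prod>i\<in>{1..k+1}. card (P i))" by (simp add: card_PiE)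
  also have "\<dots> \<le> (\<Prod>i\<in>{1..k+1}. n)" using assms by (intro prod_mono) auto
  finally show ?thesis by simp
qed

lemma Ck_ge:
  assumes "\<forall>i\<in>{1..k+1}. finite (P i) \<and> card (P i) \<le> n"
  shows "card (incr_tuples k \<delta> P) \<le> Ck k \<delta> n"
proof -
  let ?V = "{Ck_sets k \<delta> P | P. \<forall>i\<in>{1..k+1}. finite (P i) \<and> card (P i) \<le> n}"
  have fin: "finite ?V"
  proof (rule finite_subset[of _ "{..n^(k+1)}"])
    show "?V \<subseteq> {..n^(k+1)}" using Ck_sets_le[of k _ n \<delta>] by fastforce
  qed auto
  have "card (incr_tuples k \<delta> P) \<le> Ck_sets k \<delta> P"
    unfolding Ck_sets_def
  proof (rule card_mono)
    show "finite (path_tuples k \<delta> P)"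
      by (rule finite_subset[OF path_sub_PiE finite_PiE]) (use assms in auto)
  qed (rule incr_sub_path)
  also have "\<dots> \<le> Max ?V" using fin assms by (intro Max_ge) auto
  finally show ?thesis unfolding Ck_def .
qed

definition config :: "nat \<Rightarrow> (nat \<Rightarrow> real) \<Rightarrow> nat \<Rightarrow> real \<Rightarrow> bool \<Rightarrow> bool \<Rightarrow> bool" where
  "config k \<delta> n N L R \<longleftrightarrow> (\<exists>P. (\<forall>i\<in>{1..k+1}. finite (P i) \<and> card (P i) \<le> n) \<and>
      N \<le> real (card (incr_tuples k \<delta> P)) \<and> (L \<longrightarrow> (\<exists>c. P 1 = {c})) \<and>
      (R \<longrightarrow> (\<exists>c. P (k+1) = {c})))"

lemma config_Ck: "config k \<delta> n N L R \<Longrightarrow> N \<le> real (Ck k \<delta> n)"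
  unfolding config_def using Ck_ge by (meson of_nat_le_iff order_trans)

lemma finite_incr:
  assumes "\<forall>i\<in>{1..k+1}. finite (P i)"
  shows "finite (incr_tuples k \<delta> P)"
proof (rule finite_subset[OF _ finite_PiE])
  show "incr_tuples k \<delta> P \<subseteq> Pi\<^sub>E {1..k+1} P"
    using incr_sub_path path_sub_PiE by blast
qed (use assms in auto)


lemma incr_tuplesI:
  assumes "p \<in> {1..k+1} \<rightarrow>\<^sub>E UNIV" "\<And>i. i\<in>{1..k+1} \<Longrightarrow> p i \<in> P i"
    "\<And>i. i\<in>{1..k} \<Longrightarrow> dist (p i) (p (i+1)) = \<delta> i \<and> lexl (p i) (p (i+1))"
  shows "p \<in> incr_tuples k \<delta> P"
  using assms unfolding incr_tuples_def by auto

lemma glue: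
  assumes c1: "config k1 \<delta>1 n N1 L True" and c2: "config k2 \<delta>2 n N2 True R"
    and N: "0 \<le> N1" "0 \<le> N2" and k: "k1 \<ge> 1"
    and d1: "\<And>i. i \<in> {1..k1} \<Longrightarrow> \<delta> i = \<delta>1 i"
    and d2: "\<And>i. i \<in> {1..k2} \<Longrightarrow> \<delta> (k1 + i) = \<delta>2 i"
  shows "config (k1+k2) \<delta> n (N1*N2) L R"
proof -
  obtain P c where P: "\<forall>i\<in>{1..k1+1}. finite (P i) \<and> card (P i) \<le> n"
    "N1 \<le> real (card (incr_tuples k1 \<delta>1 P))" "L \<longrightarrow> (\<exists>c. P 1 = {c})"
    and c: "P (k1+1) = {c}"
    using c1 unfolding config_def by auto
  obtain Q c' where Q: "\<forall>i\<in>{1..k2+1}. finite (Q i) \<and> card (Q i) \<le> n"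
    "N2 \<le> real (card (incr_tuples k2 \<delta>2 Q))" "R \<longrightarrow> (\<exists>c. Q (k2+1) = {c})"
    and c': "Q 1 = {c'}"
    using c2 unfolding config_def by auto
  define v where "v = c - c'"
  define PQ where "PQ i = (if i \<le> k1 then P i else (\<lambda>x. x + v) ` Q (i - k1))" for i
  define T1 where "T1 = incr_tuples k1 \<delta>1 P"
  define T2 where "T2 = incr_tuples k2 \<delta>2 Q"
  define F where "F = (\<lambda>(p::nat\<Rightarrow>real^2, q::nat\<Rightarrow>real^2) i.
      if i \<in> {1..k1+k2+1} then (if i \<le> k1 then p i else q (i - k1) + v) else undefined)"
  have pc: "p (k1+1) = c" if "p \<in> T1" for p
    using that c unfolding T1_def incr_tuples_def by auto
  have qc: "q 1 = c'" if "q \<in> T2" for q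
    using that c' unfolding T2_def incr_tuples_def by auto
  have FT: "F pq \<in> incr_tuples (k1+k2) \<delta> PQ" if pqin: "pq \<in> T1 \<times> T2" for pq
  proof -
    obtain p q where pq: "pq = (p,q)" "p \<in> T1" "q \<in> T2" using pqin by auto
    have p: "\<forall>i\<in>{1..k1+1}. p i \<in> P i" "\<forall>i\<in>{1..k1}. dist (p i) (p (i+1)) = \<delta>1 i \<and> lexl (p i) (p (i+1))"
      using pq unfolding T1_def incr_tuples_def by auto
    have q: "\<forall>i\<in>{1..k2+1}. q i \<in> Q i" "\<forall>i\<in>{1..k2}. dist (q i) (q (i+1)) = \<delta>2 i \<and> lexl (q i) (q (i+1))"
      using pq unfolding T2_def incr_tuples_def by auto
    have Fv: "F pq i = (if i \<le> k1 then p i else q (i - k1) + v)" if "i \<in> {1..k1+k2+1}" for i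
      using pq \<open>i \<in> {1..k1+k2+1}\<close> by (simp add: F_def)
    have Fk: "F pq (k1+1) = p (k1+1)" using Fv[of "k1+1"] pc qc pq unfolding v_def by auto
    show ?thesis
    proof (rule incr_tuplesI)
      show "F pq \<in> {1..k1+k2+1} \<rightarrow>\<^sub>E UNIV" using pq by (auto simp: F_def PiE_def extensional_def)
    next
      fix i assume i: "i \<in> {1..k1+k2+1}"
      show "F pq i \<in> PQ i"
      proof (cases "i \<le> k1")
        case True then show ?thesis using i p Fv by (auto simp: PQ_def)
      next
        case False
        then have "i - k1 \<in> {1..k2+1}" using i by auto
        then have "q (i - k1) \<in> Q (i - k1)" using q by auto
        then show ?thesis using i False Fv[of i] by (auto simp: PQ_def)
      qed
    next
      fix i assume i: "i \<in> {1..k1+k2}"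
      consider "i < k1" | "i = k1" | "i > k1" by linarith
      then show "dist (F pq i) (F pq (i+1)) = \<delta> i \<and> lexl (F pq i) (F pq (i+1))"
      proof cases
        case 1 then show ?thesis using i p Fv[of i] Fv[of "i+1"] d1[of i] by auto
      next
        case 2 then show ?thesis using i p Fv[of i] Fk d1[of i] k by auto
      next
        case 3
        then have e: "i - k1 \<in> {1..k2}" "i + 1 - k1 = i - k1 + 1" using i by auto
        have "dist (q (i-k1) + v) (q (i-k1+1) + v) = dist (q (i-k1)) (q (i-k1+1))"
          by (simp add: dist_norm)
        moreover have "lexl (q (i-k1) + v) (q (i-k1+1) + v) = lexl (q (i-k1)) (q (i-k1+1))"
          by (rule lexl_transl)
        moreover have "\<delta> i = \<delta>2 (i - k1)" using d2[of "i-k1"] e 3 by auto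
        ultimately show ?thesis using i q e 3 Fv[of i] Fv[of "i+1"] by auto
      qed
    qed
  qed
  have inj: "inj_on F (T1 \<times> T2)"
  proof (rule inj_onI)
    fix x y assume x: "x \<in> T1 \<times> T2" and y: "y \<in> T1 \<times> T2" and e: "F x = F y"
    obtain p q where pq: "x = (p,q)" "p \<in> T1" "q \<in> T2" using x by auto
    obtain p' q' where pq': "y = (p',q')" "p' \<in> T1" "q' \<in> T2" using y by auto
    have E: "\<And>i. F (p,q) i = F (p',q') i" using e pq pq' by simp
    have "p = p'"
    proof (rule PiE_ext)
      show "p \<in> {1..k1+1} \<rightarrow>\<^sub>E UNIV" "p' \<in> {1..k1+1} \<rightarrow>\<^sub>E UNIV"
        using pq pq' unfolding T1_def incr_tuples_def by auto
      fix i assume i: "i \<in> {1..k1+1}"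
      show "p i = p' i"
      proof (cases "i \<le> k1")
        case True then show ?thesis using E[of i] i by (auto simp: F_def)
      next
        case False then have "i = k1+1" using i by auto
        then show ?thesis using pc pq pq' by auto
      qed
    qed
    moreover have "q = q'"
    proof (rule PiE_ext)
      show "q \<in> {1..k2+1} \<rightarrow>\<^sub>E UNIV" "q' \<in> {1..k2+1} \<rightarrow>\<^sub>E UNIV"
        using pq pq' unfolding T2_def incr_tuples_def by auto
      fix i assume i: "i \<in> {1..k2+1}"
      have "F (p,q) (i + k1) = F (p',q') (i+k1)" by (rule E)
      then show "q i = q' i" using i by (auto simp: F_def)
    qed
    ultimately show "x = y" using pq pq' by simp
  qed
  have fin1: "finite T1" unfolding T1_def using P by (intro finite_incr) auto
  have fin2: "finite T2" unfolding T2_def using Q by (intro finite_incr) auto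
  have PQb: "\<forall>i\<in>{1..k1+k2+1}. finite (PQ i) \<and> card (PQ i) \<le> n"
  proof
    fix i assume i: "i \<in> {1..k1+k2+1}"
    show "finite (PQ i) \<and> card (PQ i) \<le> n"
    proof (cases "i \<le> k1")
      case True then show ?thesis using P i by (auto simp: PQ_def)
    next
      case False
      then have "i - k1 \<in> {1..k2+1}" using i by auto
      then show ?thesis using Q False unfolding PQ_def
        by (auto intro: order_trans[OF card_image_le])
    qed
  qed
  have "N1 * N2 \<le> real (card T1) * real (card T2)"
    using P(2) Q(2) N unfolding T1_def T2_def by (intro mult_mono) auto
  also have "\<dots> = real (card (T1 \<times> T2))" by (simp add: card_cartesian_product)
  also have "\<dots> = real (card (F ` (T1 \<times> T2)))" using inj by (simp add: card_image)
  also have "\<dots> \<le> real (card (incr_tuples (k1+k2) \<delta> PQ))"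
    using FT PQb by (intro of_nat_mono card_mono finite_incr) auto
  finally have cnt: "N1 * N2 \<le> real (card (incr_tuples (k1+k2) \<delta> PQ))" .
  have "L \<longrightarrow> (\<exists>c. PQ 1 = {c})" using P(3) k by (auto simp: PQ_def)
  moreover have "R \<longrightarrow> (\<exists>c. PQ (k1+k2+1) = {c})"
    using Q(3) k by (auto simp: PQ_def)
  ultimately show ?thesis unfolding config_def using PQb cnt by blast
qed


definition pt :: "real \<Rightarrow> real \<Rightarrow> real^2" where "pt x y = vector [x, y]"

lemma pt_nth[simp]: "pt x y $ 1 = x" "pt x y $ 2 = y" by (simp_all add: pt_def)

lemma pt_eq: "(v::real^2) = pt (v$1) (v$2)"
  unfolding vec_eq_iff forall_2 by simp

lemma norm2: "norm (x::real^2) = sqrt ((x$1)^2 + (x$2)^2)"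
  using dist2[of x 0] by (simp add: dist_norm)

definition circ :: "real \<Rightarrow> real^2" where
  "circ t = pt ((1 - t^2)/(1 + t^2)) (2*t/(1+t^2))"

lemma norm_circ: "norm (circ t) = 1"
proof -
  have p: "1 + t^2 > 0" by (simp add: add_pos_nonneg)
  have e: "(1 - t^2)^2 + (2*t)^2 = (1+t^2)^2" by (simp add: algebra_simps power2_eq_square)
  have "((1 - t^2)/(1 + t^2))^2 + (2*t/(1+t^2))^2 = ((1 - t^2)^2 + (2*t)^2) / (1+t^2)^2"
    by (simp add: power_divide add_divide_distrib)
  also have "\<dots> = 1" using e p by simp
  finally have "((1 - t^2)/(1 + t^2))^2 + (2*t/(1+t^2))^2 = 1" .
  then show ?thesis unfolding norm2 circ_def by simp
qed

lemma circ1_pos: "\<bar>t\<bar> < 1 \<Longrightarrow> circ t $ 1 > 0"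
proof -
  assume "\<bar>t\<bar> < 1"
  then have "t^2 < 1" by (simp add: abs_square_less_1)
  moreover have "1 + t^2 > 0" by (simp add: add_pos_nonneg)
  ultimately show ?thesis unfolding circ_def by simp
qed

lemma circ_inj: assumes "0 \<le> s" "s < 1" "0 \<le> t" "t < 1" "circ s = circ t" shows "s = t"
proof -
  have "(circ s) $ 2 = (circ t) $ 2" using assms by simp
  then have e: "2 * s /(1+s^2) = 2*t/(1+t^2)" unfolding circ_def by simp
  have p: "1 + t^2 > 0" "1 + s^2 > 0" by (simp_all add: add_pos_nonneg)
  then have "s * (1 + t^2) = t * (1 + s^2)" using e by (simp add: field_simps)
  then have "(s - t) * (1 - s*t) = 0" by (simp add: algebra_simps power2_eq_square)
  moreover have "s * t < 1" using assms by (metis mult_strict_mono' mult_1_right less_eq_real_def mult_less_cancel_left1 not_less zero_le_mult_iff)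
  ultimately show ?thesis by simp
qed

definition tup :: "(real^2) list \<Rightarrow> nat \<Rightarrow> real^2" where
  "tup xs = (\<lambda>i. if i \<in> {1..length xs} then xs ! (i - 1) else undefined)"

lemma tup_incr:
  assumes "length xs = k + 1" "\<And>i. i < k + 1 \<Longrightarrow> xs ! i \<in> P (i+1)"
    "\<And>i. i < k \<Longrightarrow> dist (xs ! i) (xs ! (i+1)) = \<delta> (i+1) \<and> lexl (xs ! i) (xs ! (i+1))"
  shows "tup xs \<in> incr_tuples k \<delta> P"
proof (rule incr_tuplesI)
  show "tup xs \<in> {1..k + 1} \<rightarrow>\<^sub>E UNIV" using assms(1) by (auto simp: tup_def)
next
  fix i assume "i \<in> {1..k+1}"
  then show "tup xs i \<in> P i" using assms(1) assms(2)[of "i-1"] by (auto simp: tup_def)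
next
  fix i assume i: "i \<in> {1..k}"
  then have "tup xs i = xs ! (i-1)" "tup xs (i+1) = xs ! (i - 1 + 1)" using assms(1) by (auto simp: tup_def)
  then show "dist (tup xs i) (tup xs (i + 1)) = \<delta> i \<and> lexl (tup xs i) (tup xs (i + 1))"
    using assms(3)[of "i-1"] i by auto
qed

lemma tup_nth: "i < length xs \<Longrightarrow> tup xs (i+1) = xs ! i"
  by (simp add: tup_def)

lemma config_intro:
  assumes "\<forall>i\<in>{1..k+1}. finite (P i) \<and> card (P i) \<le> n"
    "inj_on f T" "f ` T \<subseteq> incr_tuples k \<delta> P" "N \<le> real (card T)"
    "L \<longrightarrow> (\<exists>c. P 1 = {c})" "R \<longrightarrow> (\<exists>c. P (k+1) = {c})"
  shows "config k \<delta> n N L R"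
proof -
  have "card T = card (f ` T)" using assms(2) by (simp add: card_image)
  also have "\<dots> \<le> card (incr_tuples k \<delta> P)"
    using assms(1,3) by (intro card_mono finite_incr) auto
  finally show ?thesis unfolding config_def using assms by (meson of_nat_le_iff order_trans)
qed

definition param :: "nat \<Rightarrow> real \<Rightarrow> real \<Rightarrow> real set" where
  "param n a w = (\<lambda>j. a + w * real j / real n) ` {..<n}"

lemma param_card: "w > 0 \<Longrightarrow> card (param n a w) = n"
  unfolding param_def
  by (subst card_image) (auto simp: inj_on_def field_simps)

lemma param_range: "w > 0 \<Longrightarrow> t \<in> param n a w \<Longrightarrow> a \<le> t \<and> t < a + w"
  unfolding param_def by (auto simp: field_simps)

lemma param_fin: "finite (param n a w)" unfolding param_def by simp


lemma start_gadget:
  assumes "\<alpha> > 0" "\<delta> 1 = \<alpha>" "n \<ge> 1"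
  shows "config 1 \<delta> n (real n) False True"
proof -
  define T where "T = param n 0 (1/2)"
  define f where "f t = - (\<alpha> *\<^sub>R circ t)" for t
  define P where "P i = (if i = 1 then f ` T else {0})" for i :: nat
  have Tr: "t \<in> T \<Longrightarrow> 0 \<le> t \<and> t < 1/2" for t using param_range[of "1/2" t n 0] by (auto simp: T_def)
  have cT: "card T = n" unfolding T_def by (rule param_card) simp
  have fT: "finite T" unfolding T_def by (rule param_fin)
  show ?thesis
  proof (rule config_intro[where T=T and f="\<lambda>t. tup [f t, 0]" and P=P])
    show "\<forall>i\<in>{1..1+1}. finite (P i) \<and> card (P i) \<le> n"
    proof
      fix i :: nat assume "i \<in> {1..1+1}"
      have "card (f ` T) \<le> n" using card_image_le[OF fT, of f] cT by simp
      then show "finite (P i) \<and> card (P i) \<le> n" using fT assms(3) by (simp add: P_def)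
    qed
    show "inj_on (\<lambda>t. tup [f t, 0]) T"
    proof (rule inj_onI)
      fix s t assume st: "s \<in> T" "t \<in> T" "tup [f s, 0] = tup [f t, 0]"
      then have "f s = f t" using tup_nth[of 0 "[f s, 0]"] tup_nth[of 0 "[f t, 0]"] by simp
      then have "circ s = circ t" using assms(1) by (simp add: f_def)
      moreover have "0 \<le> s" "s < 1" "0 \<le> t" "t < 1" using Tr st by force+
      ultimately show "s = t" using circ_inj by blast
    qed
    show "(\<lambda>t. tup [f t, 0]) ` T \<subseteq> incr_tuples 1 \<delta> P"
    proof safe
      fix t assume t: "t \<in> T"
      have "circ t $ 1 > 0" using Tr[OF t] by (intro circ1_pos) auto
      then have l: "lexl (f t) 0" using assms(1) by (simp add: lexl_def f_def)
      have d: "dist (f t) 0 = \<alpha>" using assms(1) by (simp add: f_def norm_circ)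
      show "tup [f t, 0] \<in> incr_tuples 1 \<delta> P"
      proof (rule tup_incr)
        fix i :: nat assume "i < 1 + 1"
        then have "i = 0 \<or> i = 1" by linarith
        then show "[f t, 0] ! i \<in> P (i + 1)" using t by (auto simp: P_def)
      next
        fix i :: nat assume "i < 1"
        then have "i = 0" by linarith
        then show "dist ([f t, 0] ! i) ([f t, 0] ! (i + 1)) = \<delta> (i + 1) \<and> lexl ([f t, 0] ! i) ([f t, 0] ! (i + 1))"
          using l d assms(2) by simp
      qed simp
    qed
    show "real n \<le> real (card T)" using cT by simp
  qed (auto simp: P_def)
qed

lemma end_gadget:
  assumes "\<alpha> > 0" "\<delta> 1 = \<alpha>" "n \<ge> 1"
  shows "config 1 \<delta> n (real n) True False"
proof -
  define T where "T = param n 0 (1/2)"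
  define f where "f t = \<alpha> *\<^sub>R circ t" for t
  define P where "P i = (if i = 1 then {0} else f ` T)" for i :: nat
  have Tr: "t \<in> T \<Longrightarrow> 0 \<le> t \<and> t < 1/2" for t using param_range[of "1/2" t n 0] by (auto simp: T_def)
  have cT: "card T = n" unfolding T_def by (rule param_card) simp
  have fT: "finite T" unfolding T_def by (rule param_fin)
  show ?thesis
  proof (rule config_intro[where T=T and f="\<lambda>t. tup [0, f t]" and P=P])
    show "\<forall>i\<in>{1..1+1}. finite (P i) \<and> card (P i) \<le> n"
    proof
      fix i :: nat assume "i \<in> {1..1+1}"
      have "card (f ` T) \<le> n" using card_image_le[OF fT, of f] cT by simp
      then show "finite (P i) \<and> card (P i) \<le> n" using fT assms(3) by (simp add: P_def)
    qed
    show "inj_on (\<lambda>t. tup [0, f t]) T"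
    proof (rule inj_onI)
      fix s t assume st: "s \<in> T" "t \<in> T" "tup [0, f s] = tup [0, f t]"
      then have "f s = f t" using tup_nth[of 1 "[0, f s]"] tup_nth[of 1 "[0, f t]"] by simp
      then have "circ s = circ t" using assms(1) by (simp add: f_def)
      moreover have "0 \<le> s" "s < 1" "0 \<le> t" "t < 1" using Tr st by force+
      ultimately show "s = t" using circ_inj by blast
    qed
    show "(\<lambda>t. tup [0, f t]) ` T \<subseteq> incr_tuples 1 \<delta> P"
    proof safe
      fix t assume t: "t \<in> T"
      have "circ t $ 1 > 0" using Tr[OF t] by (intro circ1_pos) auto
      then have l: "lexl 0 (f t)" using assms(1) by (simp add: lexl_def f_def)
      have d: "dist 0 (f t) = \<alpha>" using assms(1) by (simp add: f_def norm_circ)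
      show "tup [0, f t] \<in> incr_tuples 1 \<delta> P"
      proof (rule tup_incr)
        fix i :: nat assume "i < 1 + 1"
        then have "i = 0 \<or> i = 1" by linarith
        then show "[0, f t] ! i \<in> P (i + 1)" using t by (auto simp: P_def)
      next
        fix i :: nat assume "i < 1"
        then have "i = 0" by linarith
        then show "dist ([0, f t] ! i) ([0, f t] ! (i + 1)) = \<delta> (i + 1) \<and> lexl ([0, f t] ! i) ([0, f t] ! (i + 1))"
          using l d assms(2) by simp
      qed simp
    qed
    show "real n \<le> real (card T)" using cT by simp
  qed (auto simp: P_def)
qed


lemma end2_gadget:
  assumes "\<alpha> > 0" "\<beta> > 0" "\<delta> 1 = \<alpha>" "\<delta> 2 = \<beta>" "n \<ge> 1"
  shows "config 2 \<delta> n (real n) True False"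
proof -
  define T where "T = param n 0 (1/2)"
  define f where "f t = \<alpha> *\<^sub>R circ t" for t
  define g where "g t = f t + pt \<beta> 0" for t
  define P where "P i = (if i = 1 then {0} else if i = 2 then f ` T else g ` T)" for i :: nat
  have Tr: "t \<in> T \<Longrightarrow> 0 \<le> t \<and> t < 1/2" for t using param_range[of "1/2" t n 0] by (auto simp: T_def)
  have cT: "card T = n" unfolding T_def by (rule param_card) simp
  have fT: "finite T" unfolding T_def by (rule param_fin)
  show ?thesis
  proof (rule config_intro[where T=T and f="\<lambda>t. tup [0, f t, g t]" and P=P])
    show "\<forall>i\<in>{1..2+1}. finite (P i) \<and> card (P i) \<le> n"
    proof
      fix i :: nat assume "i \<in> {1..2+1}"
      have "card (f ` T) \<le> n" using card_image_le[OF fT, of f] cT by simp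
      moreover have "card (g ` T) \<le> n" using card_image_le[OF fT, of g] cT by simp
      ultimately show "finite (P i) \<and> card (P i) \<le> n" using fT assms(5) by (simp add: P_def)
    qed
    show "inj_on (\<lambda>t. tup [0, f t, g t]) T"
    proof (rule inj_onI)
      fix s t assume st: "s \<in> T" "t \<in> T" "tup [0, f s, g s] = tup [0, f t, g t]"
      then have "f s = f t" using tup_nth[of 1 "[0, f s, g s]"] tup_nth[of 1 "[0, f t, g t]"] by simp
      then have "circ s = circ t" using assms(1) by (simp add: f_def)
      moreover have "0 \<le> s" "s < 1" "0 \<le> t" "t < 1" using Tr st by force+
      ultimately show "s = t" using circ_inj by blast
    qed
    show "(\<lambda>t. tup [0, f t, g t]) ` T \<subseteq> incr_tuples 2 \<delta> P"
    proof safe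
      fix t assume t: "t \<in> T"
      have "circ t $ 1 > 0" using Tr[OF t] by (intro circ1_pos) auto
      then have l: "lexl 0 (f t)" using assms(1) by (simp add: lexl_def f_def)
      have l2: "lexl (f t) (g t)" using assms(2) by (simp add: lexl_def g_def)
      have d: "dist 0 (f t) = \<alpha>" using assms(1) by (simp add: f_def norm_circ)
      have d2: "dist (f t) (g t) = \<beta>" using assms(2) by (simp add: g_def dist_norm norm2)
      show "tup [0, f t, g t] \<in> incr_tuples 2 \<delta> P"
      proof (rule tup_incr)
        fix i :: nat assume "i < 2 + 1"
        then have "i = 0 \<or> i = 1 \<or> i = 2" by linarith
        then show "[0, f t, g t] ! i \<in> P (i + 1)" using t by (auto simp: P_def)
      next
        fix i :: nat assume "i < 2"
        then have "i = 0 \<or> i = 1" by linarith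
        then show "dist ([0, f t, g t] ! i) ([0, f t, g t] ! (i + 1)) = \<delta> (i + 1) \<and> lexl ([0, f t, g t] ! i) ([0, f t, g t] ! (i + 1))"
          using l d l2 d2 assms(3,4) by (auto simp: numeral_2_eq_2)
      qed simp
    qed
    show "real n \<le> real (card T)" using cT by simp
  qed (auto simp: P_def)
qed


definition ct :: "real^2 \<Rightarrow> real \<Rightarrow> real^2 \<Rightarrow> real \<Rightarrow> real" where
  "ct x r y s = (r^2 - s^2 + (dist x y)^2) / (2 * dist x y)"

definition ci :: "real^2 \<Rightarrow> real \<Rightarrow> real^2 \<Rightarrow> real \<Rightarrow> real^2" where
  "ci x r y s = (let D = dist x y; t = ct x r y s; h = sqrt (r^2 - t^2) in
     pt (x$1 + (t * (y$1 - x$1) - h * (y$2 - x$2)) / D) (x$2 + (t * (y$2 - x$2) + h * (y$1 - x$1)) / D))"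

lemma alg1:
  fixes t h d1 d2 :: real
  shows "(t*d1 - h*d2)^2 + (t*d2 + h*d1)^2 = (t^2 + h^2) * (d1^2 + d2^2)"
  by (simp add: algebra_simps power2_eq_square)

lemma alg2:
  fixes t h d1 d2 D r s :: real
  assumes "D > 0" "D^2 = d1^2 + d2^2" "h^2 = r^2 - t^2" "2*t*D = r^2 - s^2 + D^2"
  shows "((t*d1 - h*d2)/D)^2 + ((t*d2 + h*d1)/D)^2 = r^2"
    and "((t*d1 - h*d2)/D - d1)^2 + ((t*d2 + h*d1)/D - d2)^2 = s^2"
proof -
  have A: "((t*d1 - h*d2)/D)^2 + ((t*d2 + h*d1)/D)^2 = (t^2 + h^2) * (d1^2 + d2^2) / D^2"
  proof -
    have "((t*d1 - h*d2)/D)^2 + ((t*d2 + h*d1)/D)^2 = ((t*d1 - h*d2)^2 + (t*d2 + h*d1)^2)/D^2"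
      unfolding power_divide by (rule add_divide_distrib[symmetric])
    then show ?thesis using alg1[of t d1 h d2] by simp
  qed
  have "(t^2 + h^2) * (d1^2 + d2^2) / D^2 = t^2 + h^2" using assms(1) by (simp add: assms(2)[symmetric])
  then show "((t*d1 - h*d2)/D)^2 + ((t*d2 + h*d1)/D)^2 = r^2" using A assms(3) by simp
  define x1 where "x1 = (t*d1 - h*d2)/D"
  define x2 where "x2 = (t*d2 + h*d1)/D"
  have e1: "x1*d1 + x2*d2 = t * D"
  proof -
    have "x1*d1 + x2*d2 = ((t*d1 - h*d2)*d1 + (t*d2 + h*d1)*d2)/D"
      unfolding x1_def x2_def using assms(1) by (simp add: field_simps)
    also have "(t*d1 - h*d2)*d1 + (t*d2 + h*d1)*d2 = t * D^2"
      using assms(2) by (simp add: algebra_simps power2_eq_square)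
    finally show ?thesis using assms(1) by (simp add: power2_eq_square)
  qed
  have "(x1 - d1)^2 + (x2 - d2)^2 = (x1^2 + x2^2) + (d1^2 + d2^2) - 2*(x1*d1 + x2*d2)"
    by (simp add: power2_diff algebra_simps)
  also have "\<dots> = r^2 + D^2 - 2*(t*D)" using A e1 assms(2,3) unfolding x1_def x2_def
    by (simp add: \<open>((t*d1 - h*d2)/D)^2 + ((t*d2 + h*d1)/D)^2 = r^2\<close>)
  also have "\<dots> = s^2" using assms(4) by simp
  finally have "(x1 - d1)^2 + (x2 - d2)^2 = s^2" .
  then show "((t*d1 - h*d2)/D - d1)^2 + ((t*d2 + h*d1)/D - d2)^2 = s^2" unfolding x1_def x2_def .
qed

lemma ci_dist:
  assumes "x \<noteq> y" "(ct x r y s)^2 \<le> r^2" "r \<ge> 0" "s \<ge> 0"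
  shows "dist x (ci x r y s) = r" "dist (ci x r y s) y = s"
proof -
  define D where "D = dist x y"
  define t where "t = ct x r y s"
  define h where "h = sqrt (r^2 - t^2)"
  define d1 where "d1 = y$1 - x$1"
  define d2 where "d2 = y$2 - x$2"
  have D: "D > 0" using assms(1) by (simp add: D_def)
  have D2: "D^2 = d1^2 + d2^2" unfolding D_def d1_def d2_def dist2
    by (simp add: power2_commute)
  have h2: "h^2 = r^2 - t^2" unfolding h_def using assms(2) t_def by simp
  have tD: "2*t*D = r^2 - s^2 + D^2" unfolding t_def ct_def D_def using D D_def by simp
  have z: "ci x r y s = pt (x$1 + (t*d1 - h*d2)/D) (x$2 + (t*d2 + h*d1)/D)"
    unfolding ci_def Let_def D_def t_def h_def d1_def d2_def by simp
  have "dist x (ci x r y s) = sqrt (((t*d1 - h*d2)/D)^2 + ((t*d2 + h*d1)/D)^2)"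
    unfolding z dist2 by (simp add: power2_commute)
  also have "\<dots> = r" using alg2(1)[OF D D2 h2 tD] assms(3) by simp
  finally show "dist x (ci x r y s) = r" .
  have "dist (ci x r y s) y = sqrt (((t*d1 - h*d2)/D - d1)^2 + ((t*d2 + h*d1)/D - d2)^2)"
    unfolding z dist2 d1_def d2_def by (simp add: algebra_simps)
  also have "\<dots> = s" using alg2(2)[OF D D2 h2 tD] assms(4) by simp
  finally show "dist (ci x r y s) y = s" .
qed

lemma ci_tendsto:
  assumes X: "(X \<longlongrightarrow> x0) F" and Y: "(Y \<longlongrightarrow> y0) F" and ne: "x0 \<noteq> y0"
  shows "((\<lambda>z. ct (X z) r (Y z) s) \<longlongrightarrow> ct x0 r y0 s) F"
    "((\<lambda>z. ci (X z) r (Y z) s $ 1) \<longlongrightarrow> ci x0 r y0 s $ 1) F"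
    "((\<lambda>z. ci (X z) r (Y z) s $ 2) \<longlongrightarrow> ci x0 r y0 s $ 2) F"
proof -
  have D: "((\<lambda>z. dist (X z) (Y z)) \<longlongrightarrow> dist x0 y0) F" using X Y by (rule tendsto_dist)
  have Dne: "dist x0 y0 \<noteq> 0" using ne by simp
  show T: "((\<lambda>z. ct (X z) r (Y z) s) \<longlongrightarrow> ct x0 r y0 s) F"
    unfolding ct_def using X Y D Dne by (intro tendsto_intros) auto
  have X1: "((\<lambda>z. X z $ i) \<longlongrightarrow> x0 $ i) F" for i using X by (rule tendsto_vec_nth)
  have Y1: "((\<lambda>z. Y z $ i) \<longlongrightarrow> y0 $ i) F" for i using Y by (rule tendsto_vec_nth)
  have H: "((\<lambda>z. sqrt (r^2 - (ct (X z) r (Y z) s)^2)) \<longlongrightarrow> sqrt (r^2 - (ct x0 r y0 s)^2)) F"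
    using T by (intro tendsto_intros)
  show "((\<lambda>z. ci (X z) r (Y z) s $ 1) \<longlongrightarrow> ci x0 r y0 s $ 1) F"
    unfolding ci_def Let_def pt_nth using X Y X1 Y1 H T D Dne by (intro tendsto_intros) auto
  show "((\<lambda>z. ci (X z) r (Y z) s $ 2) \<longlongrightarrow> ci x0 r y0 s $ 2) F"
    unfolding ci_def Let_def pt_nth using X Y X1 Y1 H T D Dne by (intro tendsto_intros) auto
qed

definition offs :: "real \<Rightarrow> real \<Rightarrow> real^2" where
  "offs r s = pt (3*r/5 + 4* s/5) (4*r/5 - 3* s/5)"

lemma ci_nice:
  assumes r: "r > 0" and s: "s > 0"
  shows "ci x r (x + offs r s) s = x + pt (3*r/5) (4*r/5)"
    "(ct x r (x + offs r s) s)^2 < r^2"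
    "x \<noteq> x + offs r s"
proof -
  define D where "D = sqrt (r^2 + s^2)"
  have Dp: "D > 0" unfolding D_def using r by (simp add: add_pos_nonneg)
  have D2: "D^2 = r^2 + s^2" unfolding D_def by (simp add: add_nonneg_nonneg)
  have rs: "r^2 + s^2 > 0" using r by (simp add: add_pos_nonneg)
  have dd: "dist x (x + offs r s) = D"
  proof -
    have "(3*r/5 + 4* s/5)^2 + (4*r/5 - 3* s/5)^2 = r^2 + s^2"
      by (simp add: power2_eq_square field_simps)
    moreover have "dist x (x + offs r s) = norm (offs r s)" by (simp add: dist_norm)
    ultimately show ?thesis unfolding norm2 offs_def D_def by simp
  qed
  have t: "ct x r (x + offs r s) s = r^2 / D" unfolding ct_def dd using D2 Dp
    by (simp add: field_simps power2_eq_square)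
  have hD: "(r* s/D)^2 = r^2 - (r^2/D)^2"
  proof -
    have a: "(r* s/D)^2 = r^2* s^2/(r^2+s^2)" by (simp add: power_divide power_mult_distrib D2)
    have b: "r^2 - (r^2/D)^2 = r^2 - r^2*r^2/(r^2+s^2)" by (simp add: power_divide D2 power2_eq_square[of "r^2"])
    have c0: "r^2 - r^2*r^2/(r^2+s^2) = (r^2*(r^2+s^2) - r^2*r^2)/(r^2+s^2)"
      using rs by (simp add: diff_divide_distrib)
    have c1: "r^2*(r^2+s^2) - r^2*r^2 = r^2* s^2" by (simp add: algebra_simps)
    have c: "r^2 - r^2*r^2/(r^2+s^2) = r^2* s^2/(r^2+s^2)" using c0 c1 by simp
    show ?thesis using a b c by simp
  qed
  have h: "sqrt (r^2 - (r^2/D)^2) = r* s/D"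
    using hD r s Dp by (metis less_eq_real_def real_sqrt_abs zero_le_divide_iff zero_le_mult_iff abs_of_nonneg)
  have c1: "(r^2/D * (3*r/5 + 4* s/5) - r* s/D * (4*r/5 - 3* s/5)) / D = 3*r/5"
  proof -
    have "(r^2/D * (3*r/5 + 4* s/5) - r* s/D * (4*r/5 - 3* s/5)) / D = (3*r/5) * (r^2 + s^2) / D^2"
      using Dp by (simp add: field_simps power2_eq_square)
    moreover have "(3*r/5) * (r^2 + s^2) / (r^2 + s^2) = 3*r/5" by (rule nonzero_mult_div_cancel_right) (use rs in linarith)
    ultimately show ?thesis using D2 by simp
  qed
  have c2: "(r^2/D * (4*r/5 - 3* s/5) + r* s/D * (3*r/5 + 4* s/5)) / D = 4*r/5"
  proof -
    have "(r^2/D * (4*r/5 - 3* s/5) + r* s/D * (3*r/5 + 4* s/5)) / D = (4*r/5) * (r^2 + s^2) / D^2"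
      using Dp by (simp add: field_simps power2_eq_square)
    moreover have "(4*r/5) * (r^2 + s^2) / (r^2 + s^2) = 4*r/5" by (rule nonzero_mult_div_cancel_right) (use rs in linarith)
    ultimately show ?thesis using D2 by simp
  qed
  show "ci x r (x + offs r s) s = x + pt (3*r/5) (4*r/5)"
    unfolding ci_def Let_def dd t h vec_eq_iff forall_2 using c1 c2 by (simp add: offs_def)
  have "r < D" using D2 Dp s r by (smt (verit) power_mono zero_less_power)
  then have "r^2 / D < r" using r Dp by (simp add: field_simps power2_eq_square)
  moreover have "r^2 / D > 0" using r Dp by simp
  ultimately show "(ct x r (x + offs r s) s)^2 < r^2" unfolding t using r
    by (simp add: power_strict_mono)
  show "x \<noteq> x + offs r s" using dd Dp by auto
qed


lemma circ_half: "circ (1/2) = pt (3/5) (4/5)"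
  unfolding circ_def by (simp add: power2_eq_square)


lemma circ_tendsto_at: "((\<lambda>t. \<alpha> *\<^sub>R circ t) \<longlongrightarrow> \<alpha> *\<^sub>R circ t0) (at t0)"
proof (rule vec_tendstoI)
  fix i :: 2
  have p: "1 + t0^2 \<noteq> 0" using add_pos_nonneg[of 1 "t0^2"] by simp
  have "((\<lambda>t. \<alpha> * ((1 - t^2)/(1 + t^2))) \<longlongrightarrow> \<alpha> * ((1 - t0^2)/(1 + t0^2))) (at t0)"
    using p by (intro tendsto_intros) auto
  moreover have "((\<lambda>t. \<alpha> * (2*t/(1 + t^2))) \<longlongrightarrow> \<alpha> * (2*t0/(1 + t0^2))) (at t0)"
    using p by (intro tendsto_intros) auto
  ultimately show "((\<lambda>t. (\<alpha> *\<^sub>R circ t) $ i) \<longlongrightarrow> (\<alpha> *\<^sub>R circ t0) $ i) (at t0)"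
    using exhaust_2[of i] unfolding circ_def by auto
qed

lemma bridge_gadget:
  assumes pos: "\<alpha> > 0" "\<beta> > 0" "\<gamma> > 0" and d: "\<delta> 1 = \<alpha>" "\<delta> 2 = \<beta>" "\<delta> 3 = \<gamma>" and n: "n \<ge> 1"
  shows "config 3 \<delta> n (real n) True True"
proof -
  define p where "p t = \<alpha> *\<^sub>R circ t" for t
  define p0 where "p0 = pt (3*\<alpha>/5) (4*\<alpha>/5)"
  define c' where "c' = p0 + offs \<beta> \<gamma>"
  define q where "q t = ci (p t) \<beta> c' \<gamma>" for t
  have pp0: "p (1/2) = p0" unfolding p_def p0_def circ_half by (simp add: vec_eq_iff forall_2)
  have Pt: "(p \<longlongrightarrow> p0) (at (1/2))" using circ_tendsto_at[of \<alpha> "1/2"] pp0 unfolding p_def by simp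
  have Ct: "((\<lambda>t. c') \<longlongrightarrow> c') (at (1/2))" by simp
  note nice = ci_nice[OF pos(2,3), of p0, folded c'_def]
  note lim = ci_tendsto[OF Pt Ct nice(3), of \<beta> \<gamma>, folded q_def, unfolded nice(1)]
  have ev1: "\<forall>\<^sub>F t in at (1/2). (ct (p t) \<beta> c' \<gamma>)^2 < \<beta>^2"
  proof -
    have "((\<lambda>t. (ct (p t) \<beta> c' \<gamma>)^2) \<longlongrightarrow> (ct p0 \<beta> c' \<gamma>)^2) (at (1/2))"
      using lim(1) by (rule tendsto_power)
    then show ?thesis using nice(2) by (rule order_tendstoD)
  qed
  have ev2: "\<forall>\<^sub>F t in at (1/2). p t \<noteq> c'"
  proof -
    have "((\<lambda>t. dist (p t) c') \<longlongrightarrow> dist p0 c') (at (1/2))" using Pt Ct by (rule tendsto_dist)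
    moreover have "dist p0 c' > 0" using nice(3) by simp
    ultimately have "\<forall>\<^sub>F t in at (1/2). dist (p t) c' > 0" by (rule order_tendstoD)
    then show ?thesis by (rule eventually_mono) auto
  qed
  have ev3: "\<forall>\<^sub>F t in at (1/2). p t $ 1 < q t $ 1"
  proof -
    have A: "((\<lambda>t. q t $ 1) \<longlongrightarrow> (p0 + pt (3*\<beta>/5) (4*\<beta>/5)) $ 1) (at (1/2))"
      using lim(2) by simp
    have B: "((\<lambda>t. p t $ 1) \<longlongrightarrow> p0 $ 1) (at (1/2))" by (rule tendsto_vec_nth[OF Pt])
    have "((\<lambda>t. q t $ 1 - p t $ 1) \<longlongrightarrow> (p0 + pt (3*\<beta>/5) (4*\<beta>/5)) $ 1 - p0 $ 1) (at (1/2))"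
      by (rule tendsto_diff[OF A B])
    moreover have "(p0 + pt (3*\<beta>/5) (4*\<beta>/5)) $ 1 - p0 $ 1 > 0" using pos by simp
    ultimately have "\<forall>\<^sub>F t in at (1/2). q t $ 1 - p t $ 1 > 0" by (rule order_tendstoD)
    then show ?thesis by (rule eventually_mono) auto
  qed
  have ev4: "\<forall>\<^sub>F t in at (1/2). q t $ 1 < c' $ 1"
  proof -
    have A: "((\<lambda>t. q t $ 1) \<longlongrightarrow> (p0 + pt (3*\<beta>/5) (4*\<beta>/5)) $ 1) (at (1/2))"
      using lim(2) by simp
    have "((\<lambda>t. c' $ 1 - q t $ 1) \<longlongrightarrow> c' $ 1 - (p0 + pt (3*\<beta>/5) (4*\<beta>/5)) $ 1) (at (1/2))"
      by (rule tendsto_diff[OF tendsto_const A])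
    moreover have "c' $ 1 - (p0 + pt (3*\<beta>/5) (4*\<beta>/5)) $ 1 > 0" using pos by (simp add: c'_def offs_def)
    ultimately have "\<forall>\<^sub>F t in at (1/2). c' $ 1 - q t $ 1 > 0" by (rule order_tendstoD)
    then show ?thesis by (rule eventually_mono) auto
  qed
  have ev5: "\<forall>\<^sub>F t in at (1/2::real). 0 < t \<and> t < 1"
  proof -
    have "\<forall>\<^sub>F t in at (1/2::real). 0 < t" by (intro order_tendstoD tendsto_intros) auto
    moreover have "\<forall>\<^sub>F t in at (1/2::real). t < 1" by (intro order_tendstoD tendsto_intros) auto
    ultimately show ?thesis by (rule eventually_conj)
  qed
  have "\<forall>\<^sub>F t in at (1/2::real). (ct (p t) \<beta> c' \<gamma>)^2 < \<beta>^2 \<and> p t \<noteq> c' \<and> p t $ 1 < q t $ 1 \<and> q t $ 1 < c' $ 1 \<and> 0 < t \<and> t < 1"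
    by (rule eventually_conj[OF ev1 eventually_conj[OF ev2 eventually_conj[OF ev3 eventually_conj[OF ev4 ev5]]]])
  then obtain e where e: "e > 0" and E: "\<And>t. t \<noteq> 1/2 \<Longrightarrow> dist t (1/2) < e \<Longrightarrow>
      (ct (p t) \<beta> c' \<gamma>)^2 < \<beta>^2 \<and> p t \<noteq> c' \<and> p t $ 1 < q t $ 1 \<and> q t $ 1 < c' $ 1 \<and> 0 < t \<and> t < 1"
    unfolding eventually_at by auto
  define T where "T = param n (1/2 + e/4) (e/4)"
  have cT: "card T = n" unfolding T_def by (rule param_card) (use e in simp)
  have fT: "finite T" unfolding T_def by (rule param_fin)
  have ET: "(ct (p t) \<beta> c' \<gamma>)^2 < \<beta>^2 \<and> p t \<noteq> c' \<and> p t $ 1 < q t $ 1 \<and> q t $ 1 < c' $ 1 \<and> 0 < t \<and> t < 1"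
    if "t \<in> T" for t
  proof -
    have "1/2 + e/4 \<le> t \<and> t < 1/2 + e/4 + e/4" using param_range[of "e/4" t n "1/2 + e/4"] e that
      unfolding T_def by simp
    then have "t \<noteq> 1/2" "dist t (1/2) < e" using e by (auto simp: dist_real_def)
    then show ?thesis by (rule E)
  qed
  define P where "P i = (if i = 1 then {0} else if i = 2 then p ` T else if i = 3 then q ` T else {c'})" for i :: nat
  show ?thesis
  proof (rule config_intro[where T=T and f="\<lambda>t. tup [0, p t, q t, c']" and P=P])
    show "\<forall>i\<in>{1..3+1}. finite (P i) \<and> card (P i) \<le> n"
    proof
      fix i :: nat assume "i \<in> {1..3+1}"
      have "card (p ` T) \<le> n" using card_image_le[OF fT, of p] cT by simp
      moreover have "card (q ` T) \<le> n" using card_image_le[OF fT, of q] cT by simp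
      ultimately show "finite (P i) \<and> card (P i) \<le> n" using fT n by (simp add: P_def)
    qed
    show "inj_on (\<lambda>t. tup [0, p t, q t, c']) T"
    proof (rule inj_onI)
      fix s t assume st: "s \<in> T" "t \<in> T" "tup [0, p s, q s, c'] = tup [0, p t, q t, c']"
      then have "p s = p t" using tup_nth[of 1 "[0, p s, q s, c']"] tup_nth[of 1 "[0, p t, q t, c']"] by simp
      then have "circ s = circ t" using pos(1) by (simp add: p_def)
      moreover have "0 \<le> s" "s < 1" "0 \<le> t" "t < 1" using ET st by force+
      ultimately show "s = t" using circ_inj by blast
    qed
    show "(\<lambda>t. tup [0, p t, q t, c']) ` T \<subseteq> incr_tuples 3 \<delta> P"
    proof safe
      fix t assume t: "t \<in> T"
      note Et = ET[OF t]
      have "circ t $ 1 > 0" using Et by (intro circ1_pos) auto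
      then have l1: "lexl 0 (p t)" using pos(1) by (simp add: lexl_def p_def)
      have d1: "dist 0 (p t) = \<alpha>" using pos(1) by (simp add: p_def norm_circ)
      have cd: "dist (p t) (q t) = \<beta>" "dist (q t) c' = \<gamma>"
        unfolding q_def using Et pos by (intro ci_dist; simp add: less_imp_le)+
      have l2: "lexl (p t) (q t)" "lexl (q t) c'" using Et by (auto simp: lexl_def)
      show "tup [0, p t, q t, c'] \<in> incr_tuples 3 \<delta> P"
      proof (rule tup_incr)
        fix i :: nat assume "i < 3 + 1"
        then have "i = 0 \<or> i = 1 \<or> i = 2 \<or> i = 3" by linarith
        then show "[0, p t, q t, c'] ! i \<in> P (i + 1)" using t by (auto simp: P_def)
      next
        fix i :: nat assume "i < 3"
        then have "i = 0 \<or> i = 1 \<or> i = 2" by linarith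
        then show "dist ([0, p t, q t, c'] ! i) ([0, p t, q t, c'] ! (i + 1)) = \<delta> (i + 1) \<and> lexl ([0, p t, q t, c'] ! i) ([0, p t, q t, c'] ! (i + 1))"
          using l1 d1 cd l2 d by (auto simp: numeral_2_eq_2 numeral_3_eq_3)
      qed simp
    qed
    show "real n \<le> real (card T)" using cT by simp
  qed (auto simp: P_def)
qed


definition UP :: "(real^2) set \<Rightarrow> (real^2) set set" where
  "UP S = {{p, q} | p q. p \<in> S \<and> q \<in> S \<and> dist p q = 1}"

lemma unit_pairs_UP: "unit_pairs S = card (UP S)" unfolding unit_pairs_def UP_def ..

lemma UP_sub: "UP S \<subseteq> (\<lambda>(p,q). {p,q}) ` (S \<times> S)"
  unfolding UP_def by auto

lemma unit_pairs_le: "finite S \<Longrightarrow> unit_pairs S \<le> card S * card S"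
proof -
  assume S: "finite S"
  have "unit_pairs S \<le> card ((\<lambda>(p,q). {p,q}) ` (S \<times> S))"
    unfolding unit_pairs_UP using S UP_sub by (intro card_mono) auto
  also have "\<dots> \<le> card (S \<times> S)" by (rule card_image_le) (use S in simp)
  finally show ?thesis by (simp add: card_cartesian_product)
qed

lemma u2_attained: "\<exists>S. finite S \<and> card S = n \<and> unit_pairs S = u2 n"
proof -
  let ?V = "{unit_pairs S | S. finite S \<and> card S = n}"
  have fin: "finite ?V"
    by (rule finite_subset[of _ "{..n*n}"]) (use unit_pairs_le in fastforce, simp)
  define S0 where "S0 = (\<lambda>j. pt (real j) 0) ` {..<n}"
  have "inj_on (\<lambda>j. pt (real j) 0) {..<n}"
    by (rule inj_onI) (metis of_nat_eq_iff pt_nth(1))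
  then have "card S0 = n" unfolding S0_def by (simp add: card_image)
  then have ne: "?V \<noteq> {}" unfolding S0_def by blast
  have "u2 n \<in> ?V" unfolding u2_def using Max_in[OF fin ne] .
  then show ?thesis by auto
qed

definition E0 :: "(real^2) set \<Rightarrow> ((real^2) \<times> (real^2)) set" where
  "E0 S = {(a,b) \<in> S \<times> S. dist a b = 1 \<and> lexl a b}"

lemma card_E0: "card (E0 S) = unit_pairs S"
proof -
  define g where "g = (\<lambda>(p::real^2,q::real^2). {p,q})"
  have inj: "inj_on g (E0 S)"
  proof (rule inj_onI)
    fix x y assume x: "x \<in> E0 S" and y: "y \<in> E0 S" and e: "g x = g y"
    obtain a b where ab: "x = (a,b)" "lexl a b" using x unfolding E0_def by auto
    obtain a' b' where ab': "y = (a',b')" "lexl a' b'" using y unfolding E0_def by auto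
    have "{a,b} = {a',b'}" using e ab ab' by (simp add: g_def)
    then have "a = a' \<and> b = b' \<or> a = b' \<and> b = a'" by (rule doubleton_eq_iff[THEN iffD1])
    then show "x = y" using ab ab' lexl_trans lexl_irrefl by blast
  qed
  have img: "g ` E0 S = UP S"
  proof
    show "g ` E0 S \<subseteq> UP S" unfolding g_def E0_def UP_def by auto
  next
    show "UP S \<subseteq> g ` E0 S"
    proof
      fix X assume "X \<in> UP S"
      then obtain p q where pq: "X = {p,q}" "p \<in> S" "q \<in> S" "dist p q = 1" unfolding UP_def by auto
      then have "p \<noteq> q" by auto
      then consider "lexl p q" | "lexl q p" using lexl_total by blast
      then show "X \<in> g ` E0 S"
      proof cases
        case 1 then have "(p,q) \<in> E0 S" using pq unfolding E0_def by auto
        then show ?thesis using pq by (force simp: g_def)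
      next
        case 2 then have "(q,p) \<in> E0 S" using pq unfolding E0_def by (auto simp: dist_commute)
        then show ?thesis using pq by (force simp: g_def)
      qed
    qed
  qed
  show ?thesis unfolding unit_pairs_UP img[symmetric] using inj by (simp add: card_image)
qed

lemma pigeon:
  fixes f :: "'a \<Rightarrow> 'b"
  assumes "finite Os" "Os \<noteq> {}" "finite E" "f ` E \<subseteq> Os"
  shows "\<exists>w\<in>Os. card E \<le> card Os * card {x\<in>E. f x = w}"
proof (rule ccontr)
  assume "\<not> ?thesis"
  then have lt: "\<And>w. w \<in> Os \<Longrightarrow> card Os * card {x\<in>E. f x = w} < card E" by force
  have "E = (\<Union>w\<in>Os. {x\<in>E. f x = w})" using assms(4) by auto
  then have "card E \<le> (\<Sum>w\<in>Os. card {x\<in>E. f x = w})"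
    using card_UN_le[OF assms(1), of "\<lambda>w. {x\<in>E. f x = w}"] by simp
  then have "card Os * card E \<le> (\<Sum>w\<in>Os. card Os * card {x\<in>E. f x = w})"
    by (simp add: sum_distrib_left[symmetric])
  also have "\<dots> < (\<Sum>w\<in>Os. card E)" using assms(1,2) lt by (intro sum_strict_mono) auto
  also have "\<dots> = card Os * card E" by simp
  finally show False by simp
qed

lemma floor_diff_bound:
  fixes x y e :: real
  assumes "e > 0" "\<bar>x - y\<bar> \<le> 1"
  shows "\<bar>\<lfloor>x/e\<rfloor> - \<lfloor>y/e\<rfloor>\<bar> \<le> \<lceil>1/e\<rceil> + 1"
proof -
  have a: "real_of_int \<lfloor>x/e\<rfloor> \<le> x/e" "x/e < real_of_int \<lfloor>x/e\<rfloor> + 1" by linarith+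
  have b: "real_of_int \<lfloor>y/e\<rfloor> \<le> y/e" "y/e < real_of_int \<lfloor>y/e\<rfloor> + 1" by linarith+
  have c: "\<bar>x/e - y/e\<bar> \<le> 1/e" using assms
    by (simp add: diff_divide_distrib[symmetric] abs_divide divide_right_mono)
  have d: "1/e \<le> real_of_int \<lceil>1/e\<rceil>" by simp
  have "\<bar>real_of_int (\<lfloor>x/e\<rfloor> - \<lfloor>y/e\<rfloor>)\<bar> < real_of_int (\<lceil>1/e\<rceil> + 1) + 1"
    using a b c d by (simp add: abs_less_iff abs_le_iff) linarith
  then have "\<bar>\<lfloor>x/e\<rfloor> - \<lfloor>y/e\<rfloor>\<bar> < \<lceil>1/e\<rceil> + 1 + 1"
    by linarith
  then show ?thesis by linarith
qed


lemma frac_bound: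
  fixes x e :: real assumes "e > 0"
  shows "0 \<le> x - e * of_int \<lfloor>x/e\<rfloor>" "x - e * of_int \<lfloor>x/e\<rfloor> < e"
proof -
  have a: "real_of_int \<lfloor>x/e\<rfloor> \<le> x/e" "x/e < real_of_int \<lfloor>x/e\<rfloor> + 1" by linarith+
  have "e * real_of_int \<lfloor>x/e\<rfloor> \<le> e * (x/e)" using a(1) assms by (intro mult_left_mono) auto
  then show "0 \<le> x - e * of_int \<lfloor>x/e\<rfloor>" using assms by simp
  have "e * (x/e) < e * (real_of_int \<lfloor>x/e\<rfloor> + 1)" using a(2) assms by (intro mult_strict_left_mono) auto
  then show "x - e * of_int \<lfloor>x/e\<rfloor> < e" using assms by (simp add: algebra_simps)
qed

lemma norm_l1_2: "norm (x::real^2) \<le> \<bar>x$1\<bar> + \<bar>x$2\<bar>"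
  using norm_le_l1_cart[of x] by (simp add: sum_2)

lemma localize:
  assumes eps: "\<epsilon> > 0"
  shows "\<exists>c>0. \<forall>n. \<exists>A B E. finite A \<and> card A \<le> n \<and> finite B \<and> card B \<le> n \<and>
     (\<forall>a\<in>A. norm a < \<epsilon>) \<and> E \<subseteq> A \<times> B \<and> (\<forall>(a,b)\<in>E. dist a b = 1 \<and> lexl a b) \<and>
     c * real (u2 n) \<le> real (card E)"
proof -
  define e where "e = \<epsilon>/3"
  have e: "e > 0" using eps by (simp add: e_def)
  define M where "M = \<lceil>1/e\<rceil> + 1"
  have M0: "M \<ge> 0" unfolding M_def using e
    by (smt (verit, ccfv_SIG) divide_pos_pos le_of_int_ceiling of_int_less_0_iff)
  define Os where "Os = {-M..M} \<times> {-M..M}"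
  have fO: "finite Os" unfolding Os_def by simp
  have neO: "Os \<noteq> {}" unfolding Os_def using M0 by auto
  have cO: "card Os > 0" using fO neO by (simp add: card_gt_0_iff)
  define c where "c = 1 / real (card Os)"
  have c: "c > 0" unfolding c_def using cO by simp
  show ?thesis
  proof (intro exI[of _ c] conjI allI c)
    fix n
    obtain S where S: "finite S" "card S = n" "unit_pairs S = u2 n" using u2_attained by blast
    define sq where "sq a = (\<lfloor>a$1/e\<rfloor>, \<lfloor>a$2/e\<rfloor>)" for a :: "real^2"
    define off where "off = (\<lambda>(a,b). (fst (sq b) - fst (sq a), snd (sq b) - snd (sq a)))"
    have E0fin: "finite (E0 S)" by (rule finite_subset[of _ "S \<times> S"]) (auto simp: E0_def S(1))
    have offO: "off ` E0 S \<subseteq> Os"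
    proof
      fix y assume "y \<in> off ` E0 S"
      then obtain a b where ab: "(a,b) \<in> E0 S" and y: "y = off (a,b)" by auto
      have "\<bar>b$i - a$i\<bar> \<le> 1" for i
      proof -
        have "\<bar>(b - a)$i\<bar> \<le> norm (b - a)" by (rule component_le_norm_cart)
        also have "norm (b - a) = 1" using ab by (simp add: E0_def dist_norm norm_minus_commute)
        finally show ?thesis by simp
      qed
      then have h: "\<bar>\<lfloor>b$i/e\<rfloor> - \<lfloor>a$i/e\<rfloor>\<bar> \<le> M" for i
        unfolding M_def by (intro floor_diff_bound e)
      have "\<lfloor>b$i/e\<rfloor> - \<lfloor>a$i/e\<rfloor> \<in> {-M..M}" for i using h[of i] by (simp add: abs_le_iff)
      then show "y \<in> Os" unfolding y off_def Os_def sq_def by simp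
    qed
    obtain w where w: "w \<in> Os" and wc: "card (E0 S) \<le> card Os * card {x\<in>E0 S. off x = w}"
      using pigeon[OF fO neO E0fin offO] by blast
    define E1 where "E1 = {x\<in>E0 S. off x = w}"
    have E1S: "E1 \<subseteq> S \<times> S" unfolding E1_def E0_def by auto
    have E1fin: "finite E1" unfolding E1_def using E0fin by simp
    define \<iota> where "\<iota> Q = real (to_nat (Q::int\<times>int))" for Q
    have \<iota>inj: "\<iota> Q = \<iota> Q' \<Longrightarrow> Q = Q'" for Q Q' unfolding \<iota>_def
      by (metis inj_to_nat injD of_nat_eq_iff)
    define Mx where "Mx = (\<Sum>a\<in>S. \<iota> (sq a))"
    have Mx: "\<iota> (sq a) \<le> Mx" if "a \<in> S" for a
      unfolding Mx_def by (rule member_le_sum) (use that S(1) in \<open>auto simp: \<iota>_def\<close>)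
    have Mx0: "Mx \<ge> 0" unfolding Mx_def \<iota>_def by (simp add: sum_nonneg)
    have \<iota>0: "\<iota> Q \<ge> 0" for Q by (simp add: \<iota>_def)
    define lam0 where "lam0 = e / (Mx + 1)"
    have lam0: "lam0 > 0" unfolding lam0_def using e Mx0 by simp
    define V where "V l Q = pt (l * \<iota> Q - e * of_int (fst Q)) (- e * of_int (snd Q))" for l Q
    define Bad where "Bad = {l. \<exists>a\<in>S. \<exists>a'\<in>S. sq a \<noteq> sq a' \<and> a + V l (sq a) = a' + V l (sq a')}"
    have "Bad \<subseteq> (\<lambda>(a,a'). ((a'$1 - e * of_int (fst (sq a'))) - (a$1 - e * of_int (fst (sq a)))) / (\<iota> (sq a) - \<iota> (sq a'))) ` (S \<times> S)"
    proof
      fix l assume "l \<in> Bad"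
      then obtain a a' where aa: "a \<in> S" "a' \<in> S" "sq a \<noteq> sq a'" "a + V l (sq a) = a' + V l (sq a')"
        unfolding Bad_def by blast
      have ne: "\<iota> (sq a) - \<iota> (sq a') \<noteq> 0" using aa(3) \<iota>inj[of "sq a" "sq a'"] by auto
      have "(a + V l (sq a))$1 = (a' + V l (sq a'))$1" using aa(4) by simp
      then have "a$1 + (l * \<iota> (sq a) - e * of_int (fst (sq a))) = a'$1 + (l * \<iota> (sq a') - e * of_int (fst (sq a')))"
        by (simp add: V_def)
      then have "l * (\<iota> (sq a) - \<iota> (sq a')) = (a'$1 - e * of_int (fst (sq a'))) - (a$1 - e * of_int (fst (sq a)))"
        by (simp add: algebra_simps)
      then have "l = ((a'$1 - e * of_int (fst (sq a'))) - (a$1 - e * of_int (fst (sq a)))) / (\<iota> (sq a) - \<iota> (sq a'))"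
        using ne by (simp add: eq_divide_eq)
      then show "l \<in> (\<lambda>(a,a'). ((a'$1 - e * of_int (fst (sq a'))) - (a$1 - e * of_int (fst (sq a)))) / (\<iota> (sq a) - \<iota> (sq a'))) ` (S \<times> S)"
        using aa(1,2) by force
    qed
    then have finBad: "finite Bad" by (rule finite_subset) (use S(1) in simp)
    have "\<exists>j::nat. lam0 / (real j + 2) \<notin> Bad"
    proof (rule ccontr)
      assume "\<not> ?thesis"
      then have "range (\<lambda>j::nat. lam0 / (real j + 2)) \<subseteq> Bad" by auto
      moreover have "inj (\<lambda>j::nat. lam0 / (real j + 2))"
        by (rule injI) (use lam0 in \<open>simp add: field_simps\<close>)
      ultimately have "finite (UNIV :: nat set)"
        using finBad by (meson finite_imageD finite_subset)
      then show False by simp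
    qed
    then obtain j :: nat where j: "lam0 / (real j + 2) \<notin> Bad" by blast
    define l where "l = lam0 / (real j + 2)"
    have l0: "l > 0" unfolding l_def using lam0 by simp
    have l1: "l < lam0" unfolding l_def using lam0 by (simp add: field_simps add_pos_nonneg)
    have good: "a + V l (sq a) \<noteq> a' + V l (sq a')" if "a \<in> S" "a' \<in> S" "sq a \<noteq> sq a'" for a a'
      using j that unfolding Bad_def l_def by blast
    define F where "F = (\<lambda>(a,b). (a + V l (sq a), b + V l (sq a)))"
    define E where "E = F ` E1"
    define A where "A = fst ` E"
    define B where "B = snd ` E"
    have injF: "inj_on F E1"
    proof (rule inj_onI)
      fix x y assume x: "x \<in> E1" and y: "y \<in> E1" and Fe: "F x = F y"
      obtain a b where ab: "x = (a,b)" "a \<in> S" "b \<in> S" using x E1S by auto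
      obtain a' b' where ab': "y = (a',b')" "a' \<in> S" "b' \<in> S" using y E1S by auto
      have e1: "a + V l (sq a) = a' + V l (sq a')" "b + V l (sq a) = b' + V l (sq a')"
        using Fe ab ab' by (auto simp: F_def)
      have "sq a = sq a'" using good[OF ab(2) ab'(2)] e1(1) by blast
      then show "x = y" using e1 ab ab' by simp
    qed
    have fE: "finite E" unfolding E_def using E1fin by simp
    have tau: "norm (a + V l (sq a)) < \<epsilon>" if "a \<in> S" for a
    proof -
      have f1: "0 \<le> a$1 - e * of_int \<lfloor>a$1/e\<rfloor>" "a$1 - e * of_int \<lfloor>a$1/e\<rfloor> < e"
        using frac_bound[OF e] by auto
      have f2: "0 \<le> a$2 - e * of_int \<lfloor>a$2/e\<rfloor>" "a$2 - e * of_int \<lfloor>a$2/e\<rfloor> < e"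
        using frac_bound[OF e] by auto
      have "l * \<iota> (sq a) \<le> lam0 * Mx" using l0 l1 Mx[OF that] \<iota>0
        by (meson less_eq_real_def mult_mono')
      also have "lam0 * Mx < e" unfolding lam0_def using e Mx0 by (simp add: field_simps)
      finally have g: "l * \<iota> (sq a) < e" .
      have g0: "0 \<le> l * \<iota> (sq a)" using l0 \<iota>0 by simp
      have "(a + V l (sq a))$1 = (a$1 - e * of_int \<lfloor>a$1/e\<rfloor>) + l * \<iota> (sq a)"
        by (simp add: V_def sq_def)
      moreover have "(a + V l (sq a))$2 = a$2 - e * of_int \<lfloor>a$2/e\<rfloor>"
        by (simp add: V_def sq_def)
      ultimately have "\<bar>(a + V l (sq a))$1\<bar> + \<bar>(a + V l (sq a))$2\<bar> < 3 * e"
        using f1 f2 g g0 by simp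
      then show ?thesis using norm_l1_2[of "a + V l (sq a)"] e_def by simp
    qed
    show "\<exists>A B E. finite A \<and> card A \<le> n \<and> finite B \<and> card B \<le> n \<and>
     (\<forall>a\<in>A. norm a < \<epsilon>) \<and> E \<subseteq> A \<times> B \<and> (\<forall>(a,b)\<in>E. dist a b = 1 \<and> lexl a b) \<and>
     c * real (u2 n) \<le> real (card E)"
    proof (rule exI[of _ A], rule exI[of _ B], rule exI[of _ E], intro conjI)
      show "finite A" by (simp add: A_def fE)
      show "finite B" by (simp add: B_def fE)
      have As: "A \<subseteq> (\<lambda>a. a + V l (sq a)) ` S"
        unfolding A_def E_def F_def using E1S by auto
      have "card A \<le> card ((\<lambda>a. a + V l (sq a)) ` S)" by (rule card_mono) (use S(1) As in auto)
      also have "\<dots> \<le> card S" by (rule card_image_le[OF S(1)])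
      finally show "card A \<le> n" using S(2) by simp
      have "B \<subseteq> (\<lambda>b. b + V l (fst (sq b) - fst w, snd (sq b) - snd w)) ` S"
      proof
        fix y assume "y \<in> B"
        then obtain a b where ab: "(a,b) \<in> E1" "y = b + V l (sq a)"
          unfolding B_def E_def F_def by auto
        have "off (a,b) = w" using ab(1) unfolding E1_def by simp
        then have "sq a = (fst (sq b) - fst w, snd (sq b) - snd w)"
          unfolding off_def by auto
        then show "y \<in> (\<lambda>b. b + V l (fst (sq b) - fst w, snd (sq b) - snd w)) ` S"
          using ab E1S by auto
      qed
      then have "card B \<le> card ((\<lambda>b. b + V l (fst (sq b) - fst w, snd (sq b) - snd w)) ` S)"
        by (intro card_mono) (use S(1) in auto)
      also have "\<dots> \<le> card S" by (rule card_image_le[OF S(1)])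
      finally show "card B \<le> n" using S(2) by simp
      show "\<forall>a\<in>A. norm a < \<epsilon>" unfolding A_def E_def F_def using tau E1S by auto
      show "E \<subseteq> A \<times> B" unfolding A_def B_def by force
      show "\<forall>(a,b)\<in>E. dist a b = 1 \<and> lexl a b"
      proof safe
        fix x y assume "(x,y) \<in> E"
        then obtain a b where ab: "(a,b) \<in> E1" "x = a + V l (sq a)" "y = b + V l (sq a)"
          unfolding E_def F_def by auto
        have "dist a b = 1" "lexl a b" using ab(1) unfolding E1_def E0_def by auto
        then show "dist x y = 1" "lexl x y" using ab by (auto simp: dist_norm lexl_transl)
      qed
      have "c * real (u2 n) = real (card (E0 S)) / real (card Os)"
        unfolding c_def card_E0 S(3) by simp
      also have "\<dots> \<le> real (card E1)"
      proof -
        have "real (card (E0 S)) \<le> real (card Os) * real (card E1)"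
          using wc unfolding E1_def of_nat_mult[symmetric] of_nat_le_iff .
        then show ?thesis using cO by (simp add: divide_le_eq mult.commute)
      qed
      also have "card E1 = card E" unfolding E_def using injF by (simp add: card_image)
      finally show "c * real (u2 n) \<le> real (card E)" .
    qed
  qed
qed


lemma lexl_scale0: "r > 0 \<Longrightarrow> lexl (r *\<^sub>R a) (r *\<^sub>R b) = lexl a b"
  unfolding lexl_def by auto

lemma tup_inj: assumes "tup xs = tup ys" "length xs = length ys" shows "xs = ys"
proof (rule nth_equalityI)
  show "length xs = length ys" by (rule assms(2))
  fix i assume "i < length xs"
  then show "xs ! i = ys ! i" using tup_nth[of i xs] tup_nth[of i ys] assms by simp
qed

lemma u0_gadget:
  assumes pos: "\<gamma> > 0" and d: "\<delta> 1 = \<gamma>"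
  shows "\<exists>c>0. \<forall>n. config 1 \<delta> n (c * real (u2 n)) False False"
proof -
  obtain c where c: "c > 0" and H: "\<forall>n. \<exists>A B E. finite A \<and> card A \<le> n \<and> finite B \<and> card B \<le> n \<and>
     (\<forall>a\<in>A. norm a < 1) \<and> E \<subseteq> A \<times> B \<and> (\<forall>(a,b)\<in>E. dist a b = 1 \<and> lexl a b) \<and>
     c * real (u2 n) \<le> real (card E)"
    using localize[of 1] zero_less_one by blast
  show ?thesis
  proof (intro exI[of _ c] conjI allI c)
    fix n
    obtain A B E where AB: "finite A" "card A \<le> n" "finite B" "card B \<le> n"
      and E: "E \<subseteq> A \<times> B" "\<forall>(a,b)\<in>E. dist a b = 1 \<and> lexl a b" "c * real (u2 n) \<le> real (card E)"
      using spec[OF H, of n] by (elim exE conjE) (rule that; assumption)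
    define \<sigma> where "\<sigma> x = \<gamma> *\<^sub>R x" for x :: "real^2"
    have \<sigma>inj: "\<sigma> x = \<sigma> y \<Longrightarrow> x = y" for x y using pos by (simp add: \<sigma>_def)
    define P where "P i = (if i = 1 then \<sigma> ` A else \<sigma> ` B)" for i :: nat
    show "config 1 \<delta> n (c * real (u2 n)) False False"
    proof (rule config_intro[where T=E and f="\<lambda>(a,b). tup [\<sigma> a, \<sigma> b]" and P=P])
      show "\<forall>i\<in>{1..1+1}. finite (P i) \<and> card (P i) \<le> n"
      proof
        fix i :: nat assume "i \<in> {1..1+1}"
        have "card (\<sigma> ` A) \<le> n" using card_image_le[OF AB(1), of \<sigma>] AB(2) by simp
        moreover have "card (\<sigma> ` B) \<le> n" using card_image_le[OF AB(3), of \<sigma>] AB(4) by simp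
        ultimately show "finite (P i) \<and> card (P i) \<le> n" using AB by (simp add: P_def)
      qed
      show "inj_on (\<lambda>(a,b). tup [\<sigma> a, \<sigma> b]) E"
      proof (rule inj_onI)
        fix x y assume "x \<in> E" "y \<in> E" and e: "(\<lambda>(a,b). tup [\<sigma> a, \<sigma> b]) x = (\<lambda>(a,b). tup [\<sigma> a, \<sigma> b]) y"
        obtain a b where x: "x = (a,b)" by (cases x)
        obtain a' b' where y: "y = (a',b')" by (cases y)
        note xy = x y
        have "tup [\<sigma> a, \<sigma> b] = tup [\<sigma> a', \<sigma> b']" using e xy by simp
        then have "\<sigma> a = \<sigma> a'" "\<sigma> b = \<sigma> b'"
          using tup_inj[of "[\<sigma> a, \<sigma> b]" "[\<sigma> a', \<sigma> b']"] by auto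
        then show "x = y" using xy \<sigma>inj by blast
      qed
      show "(\<lambda>(a,b). tup [\<sigma> a, \<sigma> b]) ` E \<subseteq> incr_tuples 1 \<delta> P"
      proof
        fix z assume "z \<in> (\<lambda>(a,b). tup [\<sigma> a, \<sigma> b]) ` E"
        then obtain a b where ab: "(a,b) \<in> E" "z = tup [\<sigma> a, \<sigma> b]" by auto
        have ab2: "a \<in> A" "b \<in> B" "dist a b = 1" "lexl a b" using ab(1) E by auto
        have dd: "dist (\<sigma> a) (\<sigma> b) = \<gamma>" using ab2(3) pos
          by (simp add: \<sigma>_def dist_norm scaleR_diff_right[symmetric])
        have ll: "lexl (\<sigma> a) (\<sigma> b)" using ab2(4) pos by (simp add: \<sigma>_def lexl_scale0)
        show "z \<in> incr_tuples 1 \<delta> P" unfolding ab(2)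
        proof (rule tup_incr)
          fix i :: nat assume "i < 1 + 1"
          then have "i = 0 \<or> i = 1" by linarith
          then show "[\<sigma> a, \<sigma> b] ! i \<in> P (i + 1)" using ab2 by (auto simp: P_def)
        next
          fix i :: nat assume "i < 1"
          then have "i = 0" by linarith
          then show "dist ([\<sigma> a, \<sigma> b] ! i) ([\<sigma> a, \<sigma> b] ! (i + 1)) = \<delta> (i + 1) \<and> lexl ([\<sigma> a, \<sigma> b] ! i) ([\<sigma> a, \<sigma> b] ! (i + 1))"
            using dd ll d by simp
        qed simp
      qed
      show "c * real (u2 n) \<le> real (card E)" by (rule E(3))
    qed auto
  qed
qed

lemma u_gadget:
  assumes pos: "\<alpha> > 0" "\<beta> > 0" "\<gamma> > 0" and d: "\<delta> 1 = \<alpha>" "\<delta> 2 = \<beta>" "\<delta> 3 = \<gamma>"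
  shows "\<exists>c>0. \<forall>n. n \<ge> 1 \<longrightarrow> config 3 \<delta> n (c * real (u2 n)) True False"
proof -
  define a0 where "a0 = (0::real^2) + offs \<alpha> \<beta>"
  define p where "p a = ci 0 \<alpha> a \<beta>" for a
  note nice = ci_nice[OF pos(1,2), of 0, folded a0_def]
  have Xt: "((\<lambda>a. 0::real^2) \<longlongrightarrow> 0) (at a0)" by simp
  have Yt: "((\<lambda>a. a) \<longlongrightarrow> a0) (at a0)" by (rule tendsto_ident_at)
  note lim = ci_tendsto[OF Xt Yt nice(3), of \<alpha> \<beta>, folded p_def]
  have pa0: "p a0 = 0 + pt (3*\<alpha>/5) (4*\<alpha>/5)" unfolding p_def by (rule nice(1))
  have ev1: "\<forall>\<^sub>F a in at a0. (ct 0 \<alpha> a \<beta>)^2 < \<alpha>^2"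
  proof -
    have "((\<lambda>a. (ct 0 \<alpha> a \<beta>)^2) \<longlongrightarrow> (ct 0 \<alpha> a0 \<beta>)^2) (at a0)"
      using lim(1) by (rule tendsto_power)
    then show ?thesis using nice(2) by (rule order_tendstoD)
  qed
  have ev2: "\<forall>\<^sub>F a in at a0. (0::real^2) \<noteq> a"
  proof -
    have "((\<lambda>a. dist 0 a) \<longlongrightarrow> dist 0 a0) (at a0)" using Xt Yt by (rule tendsto_dist)
    moreover have "dist 0 a0 > 0" using nice(3) by simp
    ultimately have "\<forall>\<^sub>F a in at a0. dist 0 a > 0" by (rule order_tendstoD)
    then show ?thesis by (rule eventually_mono) auto
  qed
  have ev3: "\<forall>\<^sub>F a in at a0. 0 < p a $ 1"
  proof -
    have A: "((\<lambda>a. p a $ 1) \<longlongrightarrow> (0 + pt (3*\<alpha>/5) (4*\<alpha>/5)) $ 1) (at a0)" using lim(2) pa0 by simp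
    moreover have "(0 + pt (3*\<alpha>/5) (4*\<alpha>/5)) $ 1 > 0" using pos by simp
    ultimately show ?thesis by (rule order_tendstoD)
  qed
  have ev4: "\<forall>\<^sub>F a in at a0. p a $ 1 < a $ 1"
  proof -
    have A: "((\<lambda>a. p a $ 1) \<longlongrightarrow> (0 + pt (3*\<alpha>/5) (4*\<alpha>/5)) $ 1) (at a0)" using lim(2) pa0 by simp
    have B: "((\<lambda>a. a $ 1) \<longlongrightarrow> a0 $ 1) (at a0)" by (rule tendsto_vec_nth[OF Yt])
    have "((\<lambda>a. a $ 1 - p a $ 1) \<longlongrightarrow> a0 $ 1 - (0 + pt (3*\<alpha>/5) (4*\<alpha>/5)) $ 1) (at a0)"
      by (rule tendsto_diff[OF B A])
    moreover have "a0 $ 1 - (0 + pt (3*\<alpha>/5) (4*\<alpha>/5)) $ 1 > 0" using pos by (simp add: a0_def offs_def)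
    ultimately have "\<forall>\<^sub>F a in at a0. a $ 1 - p a $ 1 > 0" by (rule order_tendstoD)
    then show ?thesis by (rule eventually_mono) auto
  qed
  have "\<forall>\<^sub>F a in at a0. (ct 0 \<alpha> a \<beta>)^2 < \<alpha>^2 \<and> (0::real^2) \<noteq> a \<and> 0 < p a $ 1 \<and> p a $ 1 < a $ 1"
    by (rule eventually_conj[OF ev1 eventually_conj[OF ev2 eventually_conj[OF ev3 ev4]]])
  then obtain \<rho> where \<rho>: "\<rho> > 0" and R0: "\<And>a. a \<noteq> a0 \<Longrightarrow> dist a a0 < \<rho> \<Longrightarrow>
      (ct 0 \<alpha> a \<beta>)^2 < \<alpha>^2 \<and> (0::real^2) \<noteq> a \<and> 0 < p a $ 1 \<and> p a $ 1 < a $ 1"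
    unfolding eventually_at by auto
  have R: "(ct 0 \<alpha> a \<beta>)^2 < \<alpha>^2 \<and> (0::real^2) \<noteq> a \<and> 0 < p a $ 1 \<and> p a $ 1 < a $ 1"
    if "dist a a0 < \<rho>" for a
  proof (cases "a = a0")
    case True
    have "p a0 = 0 + pt (3*\<alpha>/5) (4*\<alpha>/5)" unfolding p_def by (rule nice(1))
    then show ?thesis using True nice(2,3) pos by (simp add: a0_def offs_def)
  next
    case False then show ?thesis using R0 that by blast
  qed
  have L: "\<exists>c>0. \<forall>n. \<exists>A B E. finite A \<and> card A \<le> n \<and> finite B \<and> card B \<le> n \<and>
     (\<forall>a\<in>A. norm a < \<rho>/\<gamma>) \<and> E \<subseteq> A \<times> B \<and> (\<forall>(a,b)\<in>E. dist a b = 1 \<and> lexl a b) \<and>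
     c * real (u2 n) \<le> real (card E)"
    by (rule localize) (use \<rho> pos in simp)
  then obtain c where c: "c > 0" and H: "\<forall>n. \<exists>A B E. finite A \<and> card A \<le> n \<and> finite B \<and> card B \<le> n \<and>
     (\<forall>a\<in>A. norm a < \<rho>/\<gamma>) \<and> E \<subseteq> A \<times> B \<and> (\<forall>(a,b)\<in>E. dist a b = 1 \<and> lexl a b) \<and>
     c * real (u2 n) \<le> real (card E)"
    by blast
  show ?thesis
  proof (intro exI[of _ c] conjI allI impI c)
    fix n :: nat assume n: "n \<ge> 1"
    obtain A B E where AB: "finite A" "card A \<le> n" "finite B" "card B \<le> n"
      and An: "\<forall>a\<in>A. norm a < \<rho>/\<gamma>"
      and E: "E \<subseteq> A \<times> B" "\<forall>(a,b)\<in>E. dist a b = 1 \<and> lexl a b" "c * real (u2 n) \<le> real (card E)"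
      using spec[OF H, of n] by (elim exE conjE) (rule that; assumption)
    define \<psi> where "\<psi> x = a0 + \<gamma> *\<^sub>R x" for x :: "real^2"
    have \<psi>inj: "\<psi> x = \<psi> y \<Longrightarrow> x = y" for x y using pos by (simp add: \<psi>_def)
    have \<psi>R: "(ct 0 \<alpha> (\<psi> a) \<beta>)^2 < \<alpha>^2 \<and> (0::real^2) \<noteq> \<psi> a \<and> 0 < p (\<psi> a) $ 1 \<and> p (\<psi> a) $ 1 < \<psi> a $ 1"
      if "a \<in> A" for a
    proof (rule R)
      have "dist (\<psi> a) a0 = \<gamma> * norm a" using pos by (simp add: \<psi>_def dist_norm)
      also have "\<dots> < \<gamma> * (\<rho>/\<gamma>)" using An that pos by (intro mult_strict_left_mono) auto
      also have "\<dots> = \<rho>" using pos by simp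
      finally show "dist (\<psi> a) a0 < \<rho>" .
    qed
    define P where "P i = (if i = 1 then {0} else if i = 2 then (\<lambda>a. p (\<psi> a)) ` A else if i = 3 then \<psi> ` A else \<psi> ` B)" for i :: nat
    define f where "f = (\<lambda>(a,b). tup [0, p (\<psi> a), \<psi> a, \<psi> b])"
    show "config 3 \<delta> n (c * real (u2 n)) True False"
    proof (rule config_intro[where T=E and f=f and P=P])
      show "\<forall>i\<in>{1..3+1}. finite (P i) \<and> card (P i) \<le> n"
      proof
        fix i :: nat assume "i \<in> {1..3+1}"
        have "card ((\<lambda>a. p (\<psi> a)) ` A) \<le> n" using card_image_le[OF AB(1), of "\<lambda>a. p (\<psi> a)"] AB(2) by simp
        moreover have "card (\<psi> ` A) \<le> n" using card_image_le[OF AB(1), of \<psi>] AB(2) by simp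
        moreover have "card (\<psi> ` B) \<le> n" using card_image_le[OF AB(3), of \<psi>] AB(4) by simp
        ultimately show "finite (P i) \<and> card (P i) \<le> n" using AB n by (simp add: P_def)
      qed
      show "inj_on f E"
      proof (rule inj_onI)
        fix x y assume "x \<in> E" "y \<in> E" and e: "f x = f y"
        obtain a b where x: "x = (a,b)" by (cases x)
        obtain a' b' where y: "y = (a',b')" by (cases y)
        have "tup [0, p (\<psi> a), \<psi> a, \<psi> b] = tup [0, p (\<psi> a'), \<psi> a', \<psi> b']" using e x y by (simp add: f_def)
        then have "\<psi> a = \<psi> a'" "\<psi> b = \<psi> b'"
          using tup_inj[of "[0, p (\<psi> a), \<psi> a, \<psi> b]" "[0, p (\<psi> a'), \<psi> a', \<psi> b']"] by auto
        then show "x = y" using x y \<psi>inj by blast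
      qed
      show "f ` E \<subseteq> incr_tuples 3 \<delta> P"
      proof
        fix z assume "z \<in> f ` E"
        then obtain a b where ab: "(a,b) \<in> E" "z = tup [0, p (\<psi> a), \<psi> a, \<psi> b]" by (auto simp: f_def)
        have ab2: "a \<in> A" "b \<in> B" "dist a b = 1" "lexl a b" using ab(1) E by auto
        note Ra = \<psi>R[OF ab2(1)]
        have cd: "dist 0 (p (\<psi> a)) = \<alpha>" "dist (p (\<psi> a)) (\<psi> a) = \<beta>"
          unfolding p_def using Ra pos by (intro ci_dist; simp add: less_imp_le)+
        have l12: "lexl 0 (p (\<psi> a))" "lexl (p (\<psi> a)) (\<psi> a)" using Ra by (auto simp: lexl_def)
        have dd: "dist (\<psi> a) (\<psi> b) = \<gamma>" using ab2(3) pos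
          by (simp add: \<psi>_def dist_norm scaleR_diff_right[symmetric])
        have ll: "lexl (\<psi> a) (\<psi> b)" using ab2(4) pos by (simp add: \<psi>_def lexl_scale)
        show "z \<in> incr_tuples 3 \<delta> P" unfolding ab(2)
        proof (rule tup_incr)
          fix i :: nat assume "i < 3 + 1"
          then have "i = 0 \<or> i = 1 \<or> i = 2 \<or> i = 3" by linarith
          then show "[0, p (\<psi> a), \<psi> a, \<psi> b] ! i \<in> P (i + 1)" using ab2 by (auto simp: P_def)
        next
          fix i :: nat assume "i < 3"
          then have "i = 0 \<or> i = 1 \<or> i = 2" by linarith
          then show "dist ([0, p (\<psi> a), \<psi> a, \<psi> b] ! i) ([0, p (\<psi> a), \<psi> a, \<psi> b] ! (i + 1)) = \<delta> (i + 1) \<and> lexl ([0, p (\<psi> a), \<psi> a, \<psi> b] ! i) ([0, p (\<psi> a), \<psi> a, \<psi> b] ! (i + 1))"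
            using cd l12 dd ll d by (auto simp: numeral_2_eq_2 numeral_3_eq_3)
        qed simp
      qed
      show "c * real (u2 n) \<le> real (card E)" by (rule E(3))
    qed (auto simp: P_def)
  qed
qed


lemma chain:
  assumes "\<forall>i\<in>{1..1+3*j}. \<delta> i > 0" "n \<ge> 1"
  shows "config (1+3*j) \<delta> n (real n ^ (j+1)) False True"
  using assms(1)
proof (induction j)
  case 0
  then have "\<delta> 1 > 0" by simp
  then show ?case using start_gadget[of "\<delta> 1" \<delta> n] assms(2) by simp
next
  case (Suc j)
  have IH: "config (1+3*j) \<delta> n (real n ^ (j+1)) False True"
    using Suc.IH Suc.prems by auto
  have pos: "\<delta> (i + (1+3*j)) > 0" if "i \<in> {1..3}" for i using Suc.prems that by auto
  have B: "config 3 (\<lambda>i. \<delta> (i + (1+3*j))) n (real n) True True"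
    by (rule bridge_gadget[of "\<delta> (1 + (1+3*j))" "\<delta> (2 + (1+3*j))" "\<delta> (3 + (1+3*j))"])
       (use pos[of 1] pos[of 2] pos[of 3] assms(2) in auto)
  have C: "config ((1+3*j) + 3) \<delta> n (real n ^ (j+1) * real n) False True"
    by (rule glue[OF IH B]) (auto simp: add.commute)
  have e1: "(1+3*j) + 3 = 1 + 3 * Suc j" by simp
  have e2: "real n ^ (j+1) * real n = real n ^ (Suc j + 1)" by (simp only: power_Suc2[symmetric] Suc_eq_plus1)
  show ?case using C unfolding e1 e2 .
qed

lemma omega_from:
  assumes "c > 0" "\<And>n. n \<ge> 1 \<Longrightarrow> c * g n \<le> real (Ck k \<delta> n)" "\<And>n. g n \<ge> 0"
  shows "(\<lambda>n. real (Ck k \<delta> n)) \<in> \<Omega>(g)"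
proof (rule landau_omega.bigI[of c])
  show "c > 0" by (rule assms(1))
  show "\<forall>\<^sub>F x in at_top. c * norm (g x) \<le> norm (real (Ck k \<delta> x))"
    using eventually_ge_at_top[of 1] by (rule eventually_mono) (use assms(2,3) in auto)
qed

theorem proposition3p1:
  fixes k :: nat and \<delta> :: "nat \<Rightarrow> real"
  assumes "k \<ge> 1"
    and "\<forall>i\<in>{1..k}. \<delta> i > 0"
  shows "(k mod 3 = 0 \<or> k mod 3 = 2 \<longrightarrow>
           (\<lambda>n. real (Ck k \<delta> n)) \<in> \<Omega>(\<lambda>n. real n ^ ((k + 1) div 3 + 1)))
       \<and> (k mod 3 = 1 \<longrightarrow>
           (\<lambda>n. real (Ck k \<delta> n)) \<in> \<Omega>(\<lambda>n. real n ^ ((k - 1) div 3) * real (u2 n)))"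
proof (intro conjI impI)
  have pos: "\<And>i. 1 \<le> i \<Longrightarrow> i \<le> k \<Longrightarrow> \<delta> i > 0" using assms(2) by auto
  assume h: "k mod 3 = 0 \<or> k mod 3 = 2"
  show "(\<lambda>n. real (Ck k \<delta> n)) \<in> \<Omega>(\<lambda>n. real n ^ ((k + 1) div 3 + 1))"
  proof (rule omega_from[of 1])
    fix n :: nat assume n: "n \<ge> 1"
    from h show "1 * real n ^ ((k + 1) div 3 + 1) \<le> real (Ck k \<delta> n)"
    proof
      assume k0: "k mod 3 = 0"
      define j where "j = k div 3 - 1"
      have kj: "k = 1 + 3*j + 2" using k0 assms(1) unfolding j_def by presburger
      have C: "config (1+3*j) \<delta> n (real n ^ (j+1)) False True"
        by (rule chain) (use pos kj n in auto)
      have E: "config 2 (\<lambda>i. \<delta> (i + (1+3*j))) n (real n) True False"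
        by (rule end2_gadget[of "\<delta> (1 + (1+3*j))" "\<delta> (2 + (1+3*j))"]) (use pos kj n in auto)
      have G: "config ((1+3*j) + 2) \<delta> n (real n ^ (j+1) * real n) False False"
        by (rule glue[OF C E]) (auto simp: add.commute)
      have e: "(k + 1) div 3 + 1 = j + 2" using kj by simp
      show ?thesis using config_Ck[OF G] kj e by (simp add: algebra_simps)
    next
      assume k2: "k mod 3 = 2"
      define j where "j = k div 3"
      have kj: "k = 1 + 3*j + 1" using k2 unfolding j_def by presburger
      have C: "config (1+3*j) \<delta> n (real n ^ (j+1)) False True"
        by (rule chain) (use pos kj n in auto)
      have E: "config 1 (\<lambda>i. \<delta> (i + (1+3*j))) n (real n) True False"
        by (rule end_gadget[of "\<delta> (1 + (1+3*j))"]) (use pos kj n in auto)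
      have G: "config ((1+3*j) + 1) \<delta> n (real n ^ (j+1) * real n) False False"
        by (rule glue[OF C E]) (auto simp: add.commute)
      have e: "(k + 1) div 3 + 1 = j + 2" using kj by simp
      show ?thesis using config_Ck[OF G] kj e by (simp add: algebra_simps)
    qed
  qed simp_all
next
  have pos: "\<And>i. 1 \<le> i \<Longrightarrow> i \<le> k \<Longrightarrow> \<delta> i > 0" using assms(2) by auto
  assume k1: "k mod 3 = 1"
  show "(\<lambda>n. real (Ck k \<delta> n)) \<in> \<Omega>(\<lambda>n. real n ^ ((k - 1) div 3) * real (u2 n))"
  proof (cases "k = 1")
    case True
    obtain c where c: "c > 0" and H: "\<forall>n. config 1 \<delta> n (c * real (u2 n)) False False"
      using u0_gadget[of "\<delta> 1" \<delta>] pos[of 1] True by auto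
    show ?thesis
    proof (rule omega_from[of c])
      fix n :: nat assume "n \<ge> 1"
      show "c * (real n ^ ((k - 1) div 3) * real (u2 n)) \<le> real (Ck k \<delta> n)"
        using config_Ck[OF spec[OF H, of n]] True by simp
    qed (use c in simp_all)
  next
    case False
    define j where "j = k div 3 - 1"
    have kj: "k = 1 + 3*j + 3" using k1 False assms(1) unfolding j_def by presburger
    obtain c where c: "c > 0" and H: "\<forall>n. n \<ge> 1 \<longrightarrow> config 3 (\<lambda>i. \<delta> (i + (1+3*j))) n (c * real (u2 n)) True False"
      using u_gadget[of "\<delta> (1 + (1+3*j))" "\<delta> (2 + (1+3*j))" "\<delta> (3 + (1+3*j))" "\<lambda>i. \<delta> (i + (1+3*j))"]
        pos[of "1 + (1+3*j)"] pos[of "2 + (1+3*j)"] pos[of "3 + (1+3*j)"] kj by auto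
    show ?thesis
    proof (rule omega_from[of c])
      fix n :: nat assume n: "n \<ge> 1"
      have C: "config (1+3*j) \<delta> n (real n ^ (j+1)) False True"
        by (rule chain) (use pos kj n in auto)
      have U: "config 3 (\<lambda>i. \<delta> (i + (1+3*j))) n (c * real (u2 n)) True False"
        using H n by auto
      have G: "config ((1+3*j) + 3) \<delta> n (real n ^ (j+1) * (c * real (u2 n))) False False"
        by (rule glue[OF C U]) (use c in \<open>auto simp: add.commute\<close>)
      have e: "(k - 1) div 3 = j + 1" using kj by simp
      show "c * (real n ^ ((k - 1) div 3) * real (u2 n)) \<le> real (Ck k \<delta> n)"
        using config_Ck[OF G] kj e by (simp add: algebra_simps)
    qed (use c in simp_all)
  qed
qed


end
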